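(* Let $\gamma_1,\gamma_2\in\Psi^+$ be orthogonal roots such that $\{\gamma_1,\gamma_2\}$ is contained in some admissible subset of $\Psi^+$. Then $e_{\gamma_1}e_{\gamma_2}=e_{\gamma_2}e_{\gamma_1}$ in $\mathrm{Br}(\mathrm{F}_4)$.
   Context: $\mathrm{Br}(\mathrm{F}_4)$ is the unital associative $\mathbb Z[\delta^{\pm1}]$-algebra ($\delta$ an indeterminate) generated by $r_1,\dots,r_4,e_1,\dots,e_4$ subject to: $r_i^2=1$, $r_ie_i=e_ir_i=e_i$ for all $i$; $e_i^2=\delta e_i$ for $i\in\{3,4\}$; $e_i^2=\delta^2e_i$ for $i\in\{1,2\}$; for $\{i,j\}\in\{\{1,3\},\{1,4\},\{2,4\}\}$: $r_ir_j=r_jr_i$, $e_ir_j=r_je_i$, $e_ie_j=e_je_i$; for $(i,j)\in\{(1,2),(2,1),(3,4),(4,3)\}$: $r_ir_jr_i=r_jr_ir_j$, $r_jr_ie_j=e_ie_j$, $r_ie_jr_i=r_je_ir_j$; and $r_2r_3r_2r_3=r_3r_2r_3r_2$, $r_2r_3e_2=r_3e_2$, $r_2e_3r_2e_3=e_3e_2e_3$, $(r_2r_3r_2)e_3=e_3(r_2r_3r_2)$, $e_2r_3e_2=\delta e_2$, $e_2e_3e_2=\delta e_2$, $e_2r_3r_2=e_2r_3$, $e_2e_3r_2=e_2e_3$. Roots: $\epsilon_1,\dots,\epsilon_4$ standard basis of $\mathbb R^4$; $\beta_1=\frac12(\epsilon_1-\epsilon_2-\epsilon_3-\epsilon_4)$,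 $\beta_2=\epsilon_2$, $\beta_3=\epsilon_3-\epsilon_2$, $\beta_4=\epsilon_4-\epsilon_3$; $\Psi=\{\pm\epsilon_i\}\cup\{\pm\epsilon_i\pm\epsilon_j:i<j\}\cup\{\frac12(\pm\epsilon_1\pm\epsilon_2\pm\epsilon_3\pm\epsilon_4)\}$ with positive roots $\Psi^+$ = roots that are nonnegative combinations of the $\beta_i$; a root and its negative are identified when naming positive roots. $W=W(\mathrm{F}_4)$ is generated by $s_i=s_{\beta_i}$, identified with its image in $\mathrm{Br}(\mathrm{F}_4)$ via $s_i\mapsto r_i$; $W$ acts on $\Psi^+$ by $w\cdot\beta=$ the positive one of $\pm w\beta$. For $\beta\in\Psi^+$, $e_\beta:=we_iw^{-1}$ for any $w\in W$, $i\in\{1,\dots,4\}$ with $w\beta_i=\beta$ (this is well defined). Admissible sets: let $\Phi$ be the $\mathrm{E}_6$ root system in a Euclidean space $V$ with simple roots $\alpha_1,\dots,\alpha_6$ of squared length $2$, $(\alpha_i,\alpha_j)=-1$ for $\{i,j\}\in\{\{1,3\},\{3,4\},\{4,5\},\{5,6\},\{2,4\}\}$ and $0$ for other $i\ne j$, positive roots $\Phi^+$. $B\subseteq\Phi^+$ is admissible if its elements are mutually orthogonal and whenever $\gamma_1,\gamma_2,\gamma_3\in B$ are distinct and $\gamma\in\Phi$ has $(\gamma,\gamma_k)\in\{\pm1\}$ ($k=1,2,3$), the positive one of $\pm(2\gamma-\sum_k(\gamma,\gamma_k)\gamma_k)$ lies in $B$. With $\mathfrak p:V\to\mathbb R^4$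 linear, $\mathfrak p(\alpha_1)=\mathfrak p(\alpha_6)=\beta_1$, $\mathfrak p(\alpha_3)=\mathfrak p(\alpha_5)=\beta_2$, $\mathfrak p(\alpha_4)=\beta_3$, $\mathfrak p(\alpha_2)=\beta_4$, a set $X\subseteq\Psi^+$ of mutually orthogonal roots is admissible if $\mathfrak p^{-1}(X)\cap\Phi^+$ is admissible. *)

theory Defs
  imports "HOL-Analysis.Analysis"
begin

definition beta :: "nat \<Rightarrow> real^4" where
  "beta i = (if i = 1 then vector [1/2, -1/2, -1/2, -1/2]
             else if i = 2 then vector [0, 1, 0, 0]
             else if i = 3 then vector [0, -1, 1, 0]
             else vector [0, 0, -1, 1])"

definition PsiF4 :: "(real^4) set" where
  "PsiF4 = {v. (\<exists>i. v = axis i 1 \<or> v = - axis i 1)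
             \<or> (\<exists>i j a b. i \<noteq> j \<and> a \<in> {-1,1} \<and> b \<in> {-1,1} \<and> v = a *\<^sub>R axis i 1 + b *\<^sub>R axis j 1)
             \<or> (\<forall>i. v $ i \<in> {-1/2, 1/2})}"

definition PsiF4_pos :: "(real^4) set" where
  "PsiF4_pos = {v \<in> PsiF4. \<exists>c :: nat \<Rightarrow> real. (\<forall>i. c i \<ge> 0) \<and> v = (\<Sum>i\<in>{1..4}. c i *\<^sub>R beta i)}"

definition refl4 :: "real^4 \<Rightarrow> real^4 \<Rightarrow> real^4" where
  "refl4 b v = v - (2 * (v \<bullet> b) / (b \<bullet> b)) *\<^sub>R b"

text \<open>the Weyl group element s_{w_1} s_{w_2} ... s_{w_n} given by a word (list of indices in 1..4)\<close>
definition wact :: "nat list \<Rightarrow> real^4 \<Rightarrow> real^4" where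
  "wact w v = foldr (\<lambda>i x. refl4 (beta i) x) w v"

definition cartanE6 :: "nat \<Rightarrow> nat \<Rightarrow> int" where
  "cartanE6 i j = (if i = j then 2
     else if {i,j} \<in> {{1,3},{3,4},{4,5},{5,6},{2,4}} then -1 else 0)"

text \<open>elements of V are represented by their coordinates w.r.t. alpha_1..alpha_6\<close>
definition formE6 :: "(nat \<Rightarrow> int) \<Rightarrow> (nat \<Rightarrow> int) \<Rightarrow> int" where
  "formE6 x y = (\<Sum>i\<in>{1..6}. \<Sum>j\<in>{1..6}. x i * cartanE6 i j * y j)"

definition alphaE6 :: "nat \<Rightarrow> (nat \<Rightarrow> int)" where
  "alphaE6 i = (\<lambda>n. if n = i then 1 else 0)"

definition reflE6 :: "nat \<Rightarrow> (nat \<Rightarrow> int) \<Rightarrow> (nat \<Rightarrow> int)" where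
  "reflE6 i x = (\<lambda>n. x n - formE6 x (alphaE6 i) * alphaE6 i n)"

inductive_set PhiE6 :: "(nat \<Rightarrow> int) set" where
  simple: "i \<in> {1..6} \<Longrightarrow> alphaE6 i \<in> PhiE6"
| refl: "x \<in> PhiE6 \<Longrightarrow> i \<in> {1..6} \<Longrightarrow> reflE6 i x \<in> PhiE6"

definition PhiE6_pos :: "(nat \<Rightarrow> int) set" where
  "PhiE6_pos = {x \<in> PhiE6. \<forall>n. x n \<ge> 0}"

definition posE6 :: "(nat \<Rightarrow> int) \<Rightarrow> (nat \<Rightarrow> int)" where
  "posE6 x = (if x \<in> PhiE6_pos then x else (\<lambda>n. - x n))"

definition admissibleE6 :: "(nat \<Rightarrow> int) set \<Rightarrow> bool" where
  "admissibleE6 B \<longleftrightarrow> B \<subseteq> PhiE6_pos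
     \<and> (\<forall>x\<in>B. \<forall>y\<in>B. x \<noteq> y \<longrightarrow> formE6 x y = 0)
     \<and> (\<forall>g1\<in>B. \<forall>g2\<in>B. \<forall>g3\<in>B. \<forall>g\<in>PhiE6.
          g1 \<noteq> g2 \<and> g1 \<noteq> g3 \<and> g2 \<noteq> g3
          \<and> formE6 g g1 \<in> {-1,1} \<and> formE6 g g2 \<in> {-1,1} \<and> formE6 g g3 \<in> {-1,1}
          \<longrightarrow> posE6 (\<lambda>n. 2 * g n - formE6 g g1 * g1 n - formE6 g g2 * g2 n - formE6 g g3 * g3 n) \<in> B)"

definition palpha :: "nat \<Rightarrow> real^4" where
  "palpha i = (if i = 1 \<or> i = 6 then beta 1 else if i = 3 \<or> i = 5 then beta 2
               else if i = 4 then beta 3 else beta 4)"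

definition pE6 :: "(nat \<Rightarrow> int) \<Rightarrow> real^4" where
  "pE6 x = (\<Sum>i\<in>{1..6}. real_of_int (x i) *\<^sub>R palpha i)"

definition admissibleF4 :: "(real^4) set \<Rightarrow> bool" where
  "admissibleF4 X \<longleftrightarrow> X \<subseteq> PsiF4_pos
     \<and> (\<forall>x\<in>X. \<forall>y\<in>X. x \<noteq> y \<longrightarrow> x \<bullet> y = 0)
     \<and> admissibleE6 {x \<in> PhiE6_pos. pE6 x \<in> X}"

text \<open>d plays the role of delta; r i, e i of r_i, e_i (i = 1..4)\<close>
definition BrF4_rels :: "'a::ring_1 \<Rightarrow> (nat \<Rightarrow> 'a) \<Rightarrow> (nat \<Rightarrow> 'a) \<Rightarrow> bool" where
  "BrF4_rels d r e \<longleftrightarrow>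
     (\<forall>i\<in>{1..4}. r i * r i = 1 \<and> r i * e i = e i \<and> e i * r i = e i)
   \<and> e 3 * e 3 = d * e 3 \<and> e 4 * e 4 = d * e 4
   \<and> e 1 * e 1 = d^2 * e 1 \<and> e 2 * e 2 = d^2 * e 2
   \<and> (\<forall>(i,j)\<in>{(1,3),(3,1),(1,4),(4,1),(2,4),(4,2)}.
        r i * r j = r j * r i \<and> e i * r j = r j * e i \<and> e i * e j = e j * e i)
   \<and> (\<forall>(i,j)\<in>{(1,2),(2,1),(3,4),(4,3)}.
        r i * r j * r i = r j * r i * r j \<and> r j * r i * e j = e i * e j
        \<and> r i * e j * r i = r j * e i * r j)
   \<and> r 2 * r 3 * r 2 * r 3 = r 3 * r 2 * r 3 * r 2
   \<and> r 2 * r 3 * e 2 = r 3 * e 2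
   \<and> r 2 * e 3 * r 2 * e 3 = e 3 * e 2 * e 3
   \<and> (r 2 * r 3 * r 2) * e 3 = e 3 * (r 2 * r 3 * r 2)
   \<and> e 2 * r 3 * e 2 = d * e 2
   \<and> e 2 * e 3 * e 2 = d * e 2
   \<and> e 2 * r 3 * r 2 = e 2 * r 3
   \<and> e 2 * e 3 * r 2 = e 2 * e 3"

text \<open>a Z[delta^{+-1}]-algebra: delta is central and invertible\<close>
definition central_unit :: "'a::ring_1 \<Rightarrow> bool" where
  "central_unit d \<longleftrightarrow> (\<forall>x. d * x = x * d) \<and> (\<exists>d'. d * d' = 1 \<and> d' * d = 1)"

definition rword :: "(nat \<Rightarrow> 'a::monoid_mult) \<Rightarrow> nat list \<Rightarrow> 'a" where
  "rword r w = prod_list (map r w)"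

text \<open>w e_i w^{-1}, with w^{-1} = r_{w_n} ... r_{w_1}\<close>
definition ebeta :: "(nat \<Rightarrow> 'a::monoid_mult) \<Rightarrow> (nat \<Rightarrow> 'a) \<Rightarrow> nat list \<Rightarrow> nat \<Rightarrow> 'a" where
  "ebeta r e w i = rword r w * e i * rword r (rev w)"

end

theory Submission
  imports Defs
begin


lemma vector4_nth [simp]:
 "(vector [x,y,z,w] ::('a::zero)^4)$1 = x"
 "(vector [x,y,z,w] ::('a::zero)^4)$2 = y"
 "(vector [x,y,z,w] ::('a::zero)^4)$3 = z"
 "(vector [x,y,z,w] ::('a::zero)^4)$4 = w"
  unfolding vector_def by simp_all

definition vo :: "int list \<Rightarrow> real^4" where
  "vo t = vector [of_int (t!0)/2, of_int (t!1)/2, of_int (t!2)/2, of_int (t!3)/2]"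

lemma vo_nth [simp]: "vo t $ 1 = of_int (t!0)/2" "vo t $ 2 = of_int (t!1)/2"
  "vo t $ 3 = of_int (t!2)/2" "vo t $ 4 = of_int (t!3)/2"
  by (simp_all add: vo_def)

definition bI :: "nat \<Rightarrow> int list" where
  "bI i = (if i = 1 then [1,-1,-1,-1] else if i = 2 then [0,2,0,0]
           else if i = 3 then [0,-2,2,0] else [0,0,-2,2])"

lemma beta_vo: "beta i = vo (bI i)"
  by (simp add: beta_def bI_def vo_def)

definition reflI :: "nat \<Rightarrow> int list \<Rightarrow> int list" where
  "reflI k t = (if k = 1 then (let m = (t!0 - t!1 - t!2 - t!3) div 2 in [t!0 - m, t!1+m, t!2+m, t!3+m])
     else if k = 2 then [t!0, -t!1, t!2, t!3] else if k = 3 then [t!0,t!2,t!1,t!3] else [t!0,t!1,t!3,t!2])"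

definition dotI :: "int list \<Rightarrow> int list \<Rightarrow> int" where
  "dotI s t = s!0*t!0 + s!1*t!1 + s!2*t!2 + s!3*t!3"

lemma vo_inner: "vo s \<bullet> vo t = of_int (dotI s t) / 4"
  by (simp add: inner_vec_def sum_4 dotI_def field_simps)

lemma vo_eq: "vo s = vo t \<longleftrightarrow> (s!0 = t!0 \<and> s!1 = t!1 \<and> s!2 = t!2 \<and> s!3 = t!3)"
  by (auto simp: vec_eq_iff forall_4)

lemma refl_vo:
  assumes "k \<in> {1..4}" "even (t!0 - t!1 - t!2 - t!3)"
  shows "refl4 (beta k) (vo t) = vo (reflI k t)"
proof -
  have k: "k = 1 \<or> k = 2 \<or> k = 3 \<or> k = 4" using assms by auto
  obtain m where m: "t!0 - t!1 - t!2 - t!3 = 2*m" using assms(2) by (rule evenE)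
  have d: "(t!0 - t!1 - t!2 - t!3) div 2 = m" using m by simp
  have ip: "vo t \<bullet> beta k = of_int (dotI t (bI k))/4" by (simp add: beta_vo vo_inner)
  have bb: "beta k \<bullet> beta k = of_int (dotI (bI k) (bI k))/4" by (simp add: beta_vo vo_inner)
  have comp: "\<And>x. (vo t - x *\<^sub>R vo (bI k)) $ j = vo t $ j - x * vo (bI k) $ j" for j by simp
  show ?thesis
    using k
  proof (elim disjE)
    assume k1: "k = 1"
    have "refl4 (beta k) (vo t) = vo t - of_int m *\<^sub>R vo (bI 1)"
      unfolding refl4_def ip bb using k1 m by (simp add: bI_def dotI_def beta_vo)
    moreover have "reflI 1 t = [t!0 - m, t!1+m, t!2+m, t!3+m]"
      unfolding reflI_def Let_def d by simp
    ultimately show ?thesis using k1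
      by (simp add: vec_eq_iff forall_4 bI_def field_simps)
  next
    assume k2: "k = 2" 
    have "refl4 (beta k) (vo t) = vo t - (of_int (t!1)) *\<^sub>R vo (bI 2)"
      unfolding refl4_def ip bb using k2 by (simp add: bI_def dotI_def beta_vo)
    then show ?thesis using k2
      by (simp add: vec_eq_iff forall_4 reflI_def bI_def field_simps)
  next
    assume k3: "k = 3" 
    have "refl4 (beta k) (vo t) = vo t - (of_int (t!2 - t!1)/2) *\<^sub>R vo (bI 3)"
      unfolding refl4_def ip bb using k3 by (simp add: bI_def dotI_def beta_vo)
    then show ?thesis using k3
      by (simp add: vec_eq_iff forall_4 reflI_def bI_def field_simps)
  next
    assume k4: "k = 4" 
    have "refl4 (beta k) (vo t) = vo t - (of_int (t!3 - t!2)/2) *\<^sub>R vo (bI 4)"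
      unfolding refl4_def ip bb using k4 by (simp add: bI_def dotI_def beta_vo)
    then show ?thesis using k4
      by (simp add: vec_eq_iff forall_4 reflI_def bI_def field_simps)
  qed
qed



definition lett :: "'a::ring_1 \<Rightarrow> (nat \<Rightarrow> 'a) \<Rightarrow> (nat \<Rightarrow> 'a) \<Rightarrow> nat \<Rightarrow> 'a" where
  "lett d r e c = (if c \<le> 4 then r c else if c \<le> 8 then e (c - 4) else d)"

definition ev :: "'a::ring_1 \<Rightarrow> (nat \<Rightarrow> 'a) \<Rightarrow> (nat \<Rightarrow> 'a) \<Rightarrow> nat list \<Rightarrow> 'a" where
  "ev d r e w = prod_list (map (lett d r e) w)"

lemma ev_append [simp]: "ev d r e (xs @ ys) = ev d r e xs * ev d r e ys"
  by (simp add: ev_def)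
lemma ev_Nil [simp]: "ev d r e [] = 1" by (simp add: ev_def)
lemma ev_Cons: "ev d r e (x # xs) = lett d r e x * ev d r e xs" by (simp add: ev_def)

definition stepR :: "(nat list \<times> nat list) list \<Rightarrow> nat \<times> nat \<times> bool \<Rightarrow> nat list \<Rightarrow> nat list option" where
  "stepR rs s w = (case s of (i, p, b) \<Rightarrow>
     if i < length rs then
       (let A = (if b then snd (rs!i) else fst (rs!i)); B = (if b then fst (rs!i) else snd (rs!i)) in
        if take (length A) (drop p w) = A then Some (take p w @ B @ drop (p + length A) w) else None)
     else None)"

fun runR :: "(nat list \<times> nat list) list \<Rightarrow> (nat \<times> nat \<times> bool) list \<Rightarrow> nat list \<Rightarrow> nat list option" where
  "runR rs [] w = Some w"
| "runR rs (s # ss) w = (case stepR rs s w of None \<Rightarrow> None | Some w' \<Rightarrow> runR rs ss w')"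

definition validR :: "'a::ring_1 \<Rightarrow> (nat \<Rightarrow> 'a) \<Rightarrow> (nat \<Rightarrow> 'a) \<Rightarrow> (nat list \<times> nat list) list \<Rightarrow> bool" where
  "validR d r e rs \<longleftrightarrow> (\<forall>x\<in>set rs. ev d r e (fst x) = ev d r e (snd x))"

lemma stepR_sound:
  assumes "validR d r e rs" "stepR rs s w = Some w'"
  shows "ev d r e w' = ev d r e w"
proof -
  obtain i p b where s: "s = (i, p, b)" by (cases s) auto
  define A where "A = (if b then snd (rs!i) else fst (rs!i))"
  define B where "B = (if b then fst (rs!i) else snd (rs!i))"
  have i: "i < length rs" and tk: "take (length A) (drop p w) = A"
    and w': "w' = take p w @ B @ drop (p + length A) w"
    using assms(2) unfolding stepR_def s A_def B_def Let_def
    by (auto split: if_splits)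
  have "rs ! i \<in> set rs" using i by simp
  then have AB: "ev d r e A = ev d r e B" using assms(1) unfolding validR_def A_def B_def
    by auto
  have "w = take p w @ take (length A) (drop p w) @ drop (length A) (drop p w)"
    by (simp only: append_take_drop_id)
  also have "drop (length A) (drop p w) = drop (p + length A) w" by (simp add: add.commute)
  finally have "ev d r e w = ev d r e (take p w) * ev d r e A * ev d r e (drop (p + length A) w)"
    using tk by (metis ev_append mult.assoc)
  then show ?thesis using w' AB by (simp add: mult.assoc)
qed

lemma runR_sound:
  assumes "validR d r e rs" "runR rs c w = Some w'"
  shows "ev d r e w = ev d r e w'"
  using assms(2)
proof (induction c arbitrary: w)
  case Nil then show ?case by simp
next
  case (Cons s ss)
  then obtain w1 where w1: "stepR rs s w = Some w1" "runR rs ss w1 = Some w'"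
    by (auto split: option.splits)
  then show ?case using Cons.IH stepR_sound[OF assms(1) w1(1)] by metis
qed

fun chainR :: "(nat list \<times> nat list) list \<Rightarrow> (nat list \<times> nat list \<times> (nat \<times> nat \<times> bool) list) list \<Rightarrow> bool" where
  "chainR rs [] = True"
| "chainR rs (x # xs) = (case x of (L, R, c) \<Rightarrow> runR rs c L = Some R \<and> chainR (rs @ [(L, R)]) xs)"

definition rl :: "nat list \<times> nat list \<times> (nat \<times> nat \<times> bool) list \<Rightarrow> nat list \<times> nat list" where
  "rl x = (fst x, fst (snd x))"

lemma chainR_sound:
  assumes "validR d r e rs" "chainR rs D"
  shows "validR d r e (rs @ map rl D)"
  using assms
proof (induction D arbitrary: rs)
  case Nil then show ?case by simp
next
  case (Cons x D)
  obtain L R c where x: "x = (L, R, c)" by (cases x) auto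
  have run: "runR rs c L = Some R" and ch: "chainR (rs @ [(L, R)]) D"
    using Cons.prems(2) x by auto
  have "ev d r e L = ev d r e R" using runR_sound[OF Cons.prems(1) run] .
  then have "validR d r e (rs @ [(L, R)])" using Cons.prems(1) by (auto simp: validR_def)
  from Cons.IH[OF this ch] show ?case by (simp add: x rl_def)
qed

definition roots48 :: "int list list" where
  "roots48 = [[-2, -2, 0, 0], [-2, 0, -2, 0], [-2, 0, 0, -2], [-2, 0, 0, 0], [-2, 0, 0, 2], [-2, 0, 2, 0], [-2, 2, 0, 0], [-1, -1, -1, -1], [-1, -1, -1, 1], [-1, -1, 1, -1], [-1, -1, 1, 1], [-1, 1, -1, -1], [-1, 1, -1, 1], [-1, 1, 1, -1], [-1, 1, 1, 1], [0, -2, -2, 0], [0, -2, 0, -2], [0, -2, 0, 0], [0, -2, 0, 2], [0, -2, 2, 0], [0, 0, -2, -2], [0, 0, -2, 0], [0, 0, -2, 2], [0, 0, 0, -2], [0, 0, 0, 2], [0, 0, 2, -2], [0, 0, 2, 0], [0, 0, 2, 2], [0, 2, -2, 0], [0, 2, 0, -2], [0, 2, 0, 0], [0, 2, 0, 2], [0, 2, 2, 0], [1, -1, -1, -1], [1, -1, -1, 1], [1, -1, 1, -1], [1, -1, 1, 1], [1, 1, -1, -1], [1, 1, -1, 1], [1, 1, 1, -1], [1, 1, 1, 1], [2, -2, 0, 0], [2, 0, -2, 0], [2, 0, 0, -2], [2, 0, 0, 0], [2, 0, 0, 2], [2, 0, 2, 0], [2, 2, 0, 0]]"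

definition posr :: "int list list" where
  "posr = [[0, -2, 0, 2], [0, -2, 2, 0], [0, 0, -2, 2], [0, 0, 0, 2], [0, 0, 2, 0], [0, 0, 2, 2], [0, 2, 0, 0], [0, 2, 0, 2], [0, 2, 2, 0], [1, -1, -1, -1], [1, -1, -1, 1], [1, -1, 1, -1], [1, -1, 1, 1], [1, 1, -1, -1], [1, 1, -1, 1], [1, 1, 1, -1], [1, 1, 1, 1], [2, -2, 0, 0], [2, 0, -2, 0], [2, 0, 0, -2], [2, 0, 0, 0], [2, 0, 0, 2], [2, 0, 2, 0], [2, 2, 0, 0]]"

definition Etab :: "(int list \<times> nat list) list" where
  "Etab = [([0, -2, 0, 2], [3, 8, 3]), ([0, -2, 2, 0], [7]), ([0, 0, -2, 2], [8]), ([0, 0, 0, 2], [4, 3, 6, 3, 4]), ([0, 0, 2, 0], [3, 6, 3]), ([0, 0, 2, 2], [3, 2, 3, 8, 3, 2, 3]), ([0, 2, 0, 0], [6]), ([0, 2, 0, 2], [2, 3, 8, 3, 2]), ([0, 2, 2, 0], [2, 7, 2]), ([1, -1, -1, -1], [5]), ([1, -1, -1, 1], [1, 4, 3, 6, 3, 4, 1]), ([1, -1, 1, -1], [1, 3, 6, 3, 1]), ([1, -1, 1, 1], [3, 2, 1, 4, 3, 6, 3, 4, 1, 2, 3]), ([1, 1, -1, -1], [1, 6, 1]), ([1, 1, -1, 1], [2, 1, 4, 3, 6, 3, 4, 1, 2]), ([1, 1, 1, -1], [2, 1, 3, 6, 3, 1, 2]), ([1, 1, 1, 1], [2, 3, 2,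 1, 4, 3, 6, 3, 4, 1, 2, 3, 2]), ([2, -2, 0, 0], [1, 3, 2, 3, 8, 3, 2, 3, 1]), ([2, 0, -2, 0], [1, 2, 3, 8, 3, 2, 1]), ([2, 0, 0, -2], [1, 2, 7, 2, 1]), ([2, 0, 0, 0], [1, 2, 3, 2, 1, 4, 3, 6, 3, 4, 1, 2, 3, 2, 1]), ([2, 0, 0, 2], [4, 3, 2, 1, 3, 2, 3, 8, 3, 2, 3, 1, 2, 3, 4]), ([2, 0, 2, 0], [3, 2, 1, 3, 2, 3, 8, 3, 2, 3, 1, 2, 3]), ([2, 2, 0, 0], [2, 1, 3, 2, 3, 8, 3, 2, 3, 1, 2])]"

definition baseR :: "(nat list \<times> nat list) list" where
  "baseR = [([1, 1], []), ([2, 2], []), ([3, 3], []), ([4, 4], []), ([1, 2, 1], [2, 1, 2]), ([3, 4, 3], [4, 3, 4]), ([2, 3, 2, 3], [3, 2, 3, 2]), ([1, 3], [3, 1]), ([1, 4], [4, 1]), ([2, 4], [4, 2]), ([1, 5], [5]), ([5, 1], [5]), ([2, 6], [6]), ([6, 2], [6]), ([3, 7], [7]), ([7, 3], [7]), ([4, 8], [8]), ([8, 4], [8]), ([5, 3], [3, 5]), ([7, 1], [1, 7]), ([5, 7], [7, 5]), ([5, 4], [4, 5]), ([8, 1], [1, 8]), ([6, 4], [4, 6]), ([8, 2], [2, 8]), ([1, 6, 1], [2, 5, 2]), ([4, 3, 8], [7, 8]), ([3, 8, 3], [4, 7, 4]), ([3, 4, 7], [8, 7]), ([2, 3, 6],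 [3, 6]), ([2, 7, 2, 7], [7, 6, 7]), ([2, 3, 2, 7], [7, 2, 3, 2]), ([6, 3, 2], [6, 3]), ([6, 7, 2], [6, 7])]"

definition derR :: "(nat list \<times> nat list \<times> (nat \<times> nat \<times> bool) list) list" where
  "derR = [([1, 7, 1], [7], [(19, 1, False), (0, 0, False)]),
    ([3, 7, 3], [7], [(15, 1, False), (14, 0, False)]),
    ([1, 8, 1], [8], [(22, 1, False), (0, 0, False)]),
    ([2, 8, 2], [8], [(24, 1, False), (1, 0, False)]),
    ([4, 8, 4], [8], [(17, 1, False), (16, 0, False)]),
    ([2, 6, 2], [6], [(13, 1, False), (12, 0, False)]),
    ([4, 6, 4], [6], [(23, 1, False), (3, 0, False)]),
    ([1, 5, 1], [5], [(11, 1, False), (10, 0, False)]),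
    ([3, 5, 3], [5], [(18, 1, False), (2, 0, False)]),
    ([4, 5, 4], [5], [(21, 1, False), (3, 0, False)]),
    ([1, 3, 8, 3, 1], [3, 8, 3], [(7, 0, False), (7, 3, True), (36, 1, False)]),
    ([4, 3, 8, 3, 4], [7], [(27, 1, False), (3, 0, False), (3, 1, False)]),
    ([4, 3, 8, 3], [7, 4], [(27, 1, False), (3, 0, False)]),
    ([2, 3, 6, 3, 2], [3, 6, 3], [(32, 2, False), (29, 0, False)]),
    ([2, 1, 6, 1, 2], [5], [(25, 1, False), (1, 0, False), (1, 1, False)]),
    ([4, 1, 6, 1, 4], [1, 6, 1], [(8, 3, False), (8, 0, True), (40, 1, False)]),
    ([2, 4, 3, 6, 3, 4, 2], [4, 3, 6, 3, 4], [(9, 0, False), (9, 5, True), (47, 1, False)]),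
    ([3, 4, 3, 6, 3, 4, 3], [4, 3, 6, 3, 4], [(5, 0, False), (5, 4, False), (40, 2, False)]),
    ([3, 2, 7, 2, 3], [2, 7, 2], [(1, 0, True), (31, 1, False), (1, 4, False), (2, 3, False)]),
    ([3, 1, 3, 6, 3, 1, 3], [1, 6, 1], [(7, 1, False), (2, 0, False), (7, 3, False), (2, 2, False)]),
    ([4, 2, 3, 8, 3, 2, 4], [2, 7, 2], [(9, 5, False), (9, 0, True), (45, 1, False)]),
    ([4, 2, 3, 8, 3, 2], [2, 7, 2, 4], [(9, 0, True), (46, 1, False), (9, 2, True)]),
    ([3, 1, 4, 3, 6, 3, 4, 1, 3], [1, 4, 3, 6, 3, 4, 1], [(7, 7, False), (7, 0, True), (51, 1, False)]),
    ([4, 1, 4, 3, 6, 3, 4, 1, 4], [1, 3, 6, 3, 1], [(8, 1, False), (3, 0, False), (8, 5, False), (3, 4, False)]),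
    ([4, 1, 4, 3, 6, 3, 4, 1], [1, 3, 6, 3, 1, 4], [(8, 1, False), (3, 0, False), (8, 4, True)]),
    ([1, 2, 1, 3, 6, 3, 1, 2, 1], [2, 1, 3, 6, 3, 1, 2], [(4, 0, False), (4, 6, False), (47, 2, False)]),
    ([3, 2, 1, 3, 6, 3, 1, 2, 3], [2, 1, 3, 6, 3, 1, 2], [(7, 2, False), (7, 5, True), (25, 3, False), (6, 5, False), (6, 0, True), (42, 3, False), (25, 2, True), (7, 4, False), (7, 1, True)]),
    ([2, 3, 2, 3, 8, 3, 2, 3, 2], [3, 2, 3, 8, 3, 2, 3], [(6, 0, False), (6, 5, True), (37, 3, False)]),
    ([4, 3, 2, 3, 8, 3, 2, 3, 4], [3, 2, 3, 8, 3, 2, 3], [(27, 3, False), (9, 2, False), (5, 0, True), (9, 5, True), (5, 6, True), (52, 2, False), (55, 2, True), (3, 1, False)]),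
    ([1, 2, 1, 4, 3, 6, 3, 4, 1, 2, 1], [2, 1, 4, 3, 6, 3, 4, 1, 2], [(4, 0, False), (4, 8, False), (50, 2, False)]),
    ([4, 2, 1, 4, 3, 6, 3, 4, 1, 2, 4], [2, 1, 3, 6, 3, 1, 2], [(9, 9, False), (9, 0, True), (57, 1, False)]),
    ([4, 2, 1, 4, 3, 6, 3, 4, 1, 2], [2, 1, 3, 6, 3, 1, 2, 4], [(9, 0, True), (58, 1, False), (9, 6, True)]),
    ([2, 1, 2, 7, 2, 1, 2], [1, 2, 7, 2, 1], [(4, 0, True), (4, 4, True), (34, 2, False)]),
    ([3, 1, 2, 7, 2, 1, 3], [1, 2, 7, 2, 1], [(7, 5, False), (7, 0, True), (52, 1, False)]),
    ([1, 3, 2, 1, 4, 3, 6, 3, 4, 1, 2, 3, 1], [3, 2, 1, 4, 3, 6, 3, 4, 1, 2, 3], [(7, 0, False), (7, 11, True), (63, 1, False)]),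
    ([4, 3, 2, 1, 4, 3, 6, 3, 4, 1, 2, 3, 4], [3, 2, 1, 4, 3, 6, 3, 4, 1, 2, 3], [(8, 3, False), (8, 8, True), (9, 2, False), (5, 0, True), (9, 9, True), (5, 10, True), (60, 2, False), (65, 2, True), (3, 1, False)]),
    ([2, 1, 2, 3, 8, 3, 2, 1, 2], [1, 2, 3, 8, 3, 2, 1], [(4, 0, True), (4, 6, True), (44, 2, False)]),
    ([4, 1, 2, 3, 8, 3, 2, 1, 4], [1, 2, 7, 2, 1], [(8, 7, False), (8, 0, True), (54, 1, False)]),
    ([3, 2, 3, 2, 1, 4, 3, 6, 3, 4, 1, 2, 3, 2, 3], [2, 3, 2, 1, 4, 3, 6, 3, 4, 1, 2, 3, 2], [(6, 11, False), (6, 0, True), (56, 3, False)]),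
    ([4, 2, 3, 2, 1, 4, 3, 6, 3, 4, 1, 2, 3, 2, 4], [2, 3, 2, 1, 4, 3, 6, 3, 4, 1, 2, 3, 2], [(9, 13, False), (9, 0, True), (69, 1, False)]),
    ([3, 1, 3, 2, 3, 8, 3, 2, 3, 1, 3], [1, 2, 3, 8, 3, 2, 1], [(7, 1, False), (2, 0, False), (7, 7, False), (2, 6, False)]),
    ([4, 1, 3, 2, 3, 8, 3, 2, 3, 1, 4], [1, 3, 2, 3, 8, 3, 2, 3, 1], [(8, 9, False), (8, 0, True), (62, 1, False)]),
    ([2, 1, 2, 3, 2, 1, 4, 3, 6, 3, 4, 1, 2, 3, 2, 1, 2], [1, 2, 3, 2, 1, 4, 3, 6, 3, 4, 1, 2, 3, 2, 1], [(4, 0, True), (4, 14, True), (68, 2, False)]),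
    ([3, 1, 2, 3, 2, 1, 4, 3, 6, 3, 4, 1, 2, 3, 2, 1, 3], [1, 2, 3, 2, 1, 4, 3, 6, 3, 4, 1, 2, 3, 2, 1], [(7, 15, False), (7, 0, True), (72, 1, False)]),
    ([4, 1, 2, 3, 2, 1, 4, 3, 6, 3, 4, 1, 2, 3, 2, 1, 4], [1, 2, 3, 2, 1, 4, 3, 6, 3, 4, 1, 2, 3, 2, 1], [(8, 15, False), (8, 0, True), (73, 1, False)]),
    ([1, 2, 1, 3, 2, 3, 8, 3, 2, 3, 1, 2, 1], [2, 1, 3, 2, 3, 8, 3, 2, 3, 1, 2], [(4, 0, False), (4, 10, False), (61, 2, False)]),
    ([4, 2, 1, 3, 2, 3, 8, 3, 2, 3, 1, 2, 4], [2, 1, 3, 2, 3, 8, 3, 2, 3, 1, 2], [(9, 11, False), (9, 0, True), (75, 1, False)]),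
    ([1, 3, 2, 1, 3, 2, 3, 8, 3, 2, 3, 1, 2, 3, 1], [3, 2, 1, 3, 2, 3, 8, 3, 2, 3, 1, 2, 3], [(7, 0, False), (7, 13, True), (79, 1, False)]),
    ([2, 3, 2, 1, 3, 2, 3, 8, 3, 2, 3, 1, 2, 3, 2], [3, 2, 1, 3, 2, 3, 8, 3, 2, 3, 1, 2, 3], [(7, 3, False), (6, 0, False), (7, 10, True), (6, 11, True), (70, 3, False), (7, 9, False), (7, 2, True)]),
    ([1, 4, 3, 2, 1, 3, 2, 3, 8, 3, 2, 3, 1, 2, 3, 4, 1], [4, 3, 2, 1, 3, 2, 3, 8, 3, 2, 3, 1, 2, 3, 4], [(8, 0, False), (8, 15, True), (81, 1, False)]),
    ([2, 4, 3, 2, 1, 3, 2, 3, 8, 3, 2, 3, 1, 2, 3, 4, 2], [4, 3, 2, 1, 3, 2, 3, 8, 3, 2, 3, 1, 2, 3, 4], [(9, 0, False), (9, 15, True), (82, 1, False)]),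
    ([3, 4, 3, 2, 1, 3, 2, 3, 8, 3, 2, 3, 1, 2, 3, 4, 3], [4, 3, 2, 1, 3, 2, 3, 8, 3, 2, 3, 1, 2, 3, 4], [(5, 0, False), (5, 14, False), (80, 2, False)]),
    ([7, 2, 7], [7, 6, 7], [(3, 0, True), (2, 1, True), (28, 2, False), (26, 0, False), (37, 1, True), (30, 3, False), (28, 2, True), (40, 5, True), (27, 3, True), (2, 2, False), (24, 1, True), (26, 0, True), (29, 3, False), (46, 0, False), (40, 1, False)]),
    ([1, 2, 1, 3, 2, 3, 8, 3, 2, 3, 1, 2, 1], [2, 1, 3, 2, 3, 8, 3, 2, 3, 1, 2], [(79, 0, False)]),
    ([2, 2, 1, 3, 2, 3, 8, 3, 2, 3, 1, 2, 2], [1, 3, 2, 3, 8, 3, 2, 3, 1], [(1, 11, False), (1, 0, False)]),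
    ([3, 2, 1, 3, 2, 3, 8, 3, 2, 3, 1, 2, 3], [3, 2, 1, 3, 2, 3, 8, 3, 2, 3, 1, 2, 3], []),
    ([4, 2, 1, 3, 2, 3, 8, 3, 2, 3, 1, 2, 4], [2, 1, 3, 2, 3, 8, 3, 2, 3, 1, 2], [(80, 0, False)]),
    ([1, 3, 2, 1, 3, 2, 3, 8, 3, 2, 3, 1, 2, 3, 1], [3, 2, 1, 3, 2, 3, 8, 3, 2, 3, 1, 2, 3], [(81, 0, False)]),
    ([2, 3, 2, 1, 3, 2, 3, 8, 3, 2, 3, 1, 2, 3, 2], [3, 2, 1, 3, 2, 3, 8, 3, 2, 3, 1, 2, 3], [(82, 0, False)]),
    ([3, 3, 2, 1, 3, 2, 3, 8, 3, 2, 3, 1, 2, 3, 3], [2, 1, 3, 2, 3, 8, 3, 2, 3, 1, 2], [(2, 13, False), (2, 0, False)]),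
    ([4, 3, 2, 1, 3, 2, 3, 8, 3, 2, 3, 1, 2, 3, 4], [4, 3, 2, 1, 3, 2, 3, 8, 3, 2, 3, 1, 2, 3, 4], []),
    ([1, 4, 3, 2, 1, 3, 2, 3, 8, 3, 2, 3, 1, 2, 3, 4, 1], [4, 3, 2, 1, 3, 2, 3, 8, 3, 2, 3, 1, 2, 3, 4], [(83, 0, False)]),
    ([2, 4, 3, 2, 1, 3, 2, 3, 8, 3, 2, 3, 1, 2, 3, 4, 2], [4, 3, 2, 1, 3, 2, 3, 8, 3, 2, 3, 1, 2, 3, 4], [(84, 0, False)]),
    ([3, 4, 3, 2, 1, 3, 2, 3, 8, 3, 2, 3, 1, 2, 3, 4, 3], [4, 3, 2, 1, 3, 2, 3, 8, 3, 2, 3, 1, 2, 3, 4], [(85, 0, False)]),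
    ([4, 4, 3, 2, 1, 3, 2, 3, 8, 3, 2, 3, 1, 2, 3, 4, 4], [3, 2, 1, 3, 2, 3, 8, 3, 2, 3, 1, 2, 3], [(3, 15, False), (3, 0, False)]),
    ([1, 1, 2, 3, 2, 1, 4, 3, 6, 3, 4, 1, 2, 3, 2, 1, 1], [2, 3, 2, 1, 4, 3, 6, 3, 4, 1, 2, 3, 2], [(0, 15, False), (0, 0, False)]),
    ([2, 1, 2, 3, 2, 1, 4, 3, 6, 3, 4, 1, 2, 3, 2, 1, 2], [1, 2, 3, 2, 1, 4, 3, 6, 3, 4, 1, 2, 3, 2, 1], [(76, 0, False)]),
    ([3, 1, 2, 3, 2, 1, 4, 3, 6, 3, 4, 1, 2, 3, 2, 1, 3], [1, 2, 3, 2, 1, 4, 3, 6, 3, 4, 1, 2, 3, 2, 1], [(77, 0, False)]),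
    ([4, 1, 2, 3, 2, 1, 4, 3, 6, 3, 4, 1, 2, 3, 2, 1, 4], [1, 2, 3, 2, 1, 4, 3, 6, 3, 4, 1, 2, 3, 2, 1], [(78, 0, False)]),
    ([1, 1, 2, 7, 2, 1, 1], [2, 7, 2], [(0, 5, False), (0, 0, False)]),
    ([2, 1, 2, 7, 2, 1, 2], [1, 2, 7, 2, 1], [(66, 0, False)]),
    ([3, 1, 2, 7, 2, 1, 3], [1, 2, 7, 2, 1], [(67, 0, False)]),
    ([4, 1, 2, 7, 2, 1, 4], [1, 2, 3, 8, 3, 2, 1], [(8, 5, False), (9, 4, False), (8, 0, True), (9, 1, True), (27, 2, True)]),
    ([1, 1, 2, 3, 8, 3, 2, 1, 1], [2, 3, 8, 3, 2], [(0, 7, False), (0, 0, False)]),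
    ([2, 1, 2, 3, 8, 3, 2, 1, 2], [1, 2, 3, 8, 3, 2, 1], [(70, 0, False)]),
    ([3, 1, 2, 3, 8, 3, 2, 1, 3], [1, 3, 2, 3, 8, 3, 2, 3, 1], [(7, 7, False), (7, 0, True)]),
    ([4, 1, 2, 3, 8, 3, 2, 1, 4], [1, 2, 7, 2, 1], [(71, 0, False)]),
    ([1, 1, 3, 2, 3, 8, 3, 2, 3, 1, 1], [3, 2, 3, 8, 3, 2, 3], [(0, 9, False), (0, 0, False)]),
    ([2, 1, 3, 2, 3, 8, 3, 2, 3, 1, 2], [2, 1, 3, 2, 3, 8, 3, 2, 3, 1, 2], []),
    ([3, 1, 3, 2, 3, 8, 3, 2, 3, 1, 3], [1, 2, 3, 8, 3, 2, 1], [(74, 0, False)]),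
    ([4, 1, 3, 2, 3, 8, 3, 2, 3, 1, 4], [1, 3, 2, 3, 8, 3, 2, 3, 1], [(75, 0, False)]),
    ([1, 2, 3, 2, 1, 4, 3, 6, 3, 4, 1, 2, 3, 2, 1], [1, 2, 3, 2, 1, 4, 3, 6, 3, 4, 1, 2, 3, 2, 1], []),
    ([2, 2, 3, 2, 1, 4, 3, 6, 3, 4, 1, 2, 3, 2, 2], [3, 2, 1, 4, 3, 6, 3, 4, 1, 2, 3], [(1, 13, False), (1, 0, False)]),
    ([3, 2, 3, 2, 1, 4, 3, 6, 3, 4, 1, 2, 3, 2, 3], [2, 3, 2, 1, 4, 3, 6, 3, 4, 1, 2, 3, 2], [(72, 0, False)]),
    ([4, 2, 3, 2, 1, 4, 3, 6, 3, 4, 1, 2, 3, 2, 4], [2, 3, 2, 1, 4, 3, 6, 3, 4, 1, 2, 3, 2], [(73, 0, False)]),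
    ([1, 2, 1, 3, 6, 3, 1, 2, 1], [2, 1, 3, 6, 3, 1, 2], [(59, 0, False)]),
    ([2, 2, 1, 3, 6, 3, 1, 2, 2], [1, 3, 6, 3, 1], [(1, 7, False), (1, 0, False)]),
    ([3, 2, 1, 3, 6, 3, 1, 2, 3], [2, 1, 3, 6, 3, 1, 2], [(60, 0, False)]),
    ([4, 2, 1, 3, 6, 3, 1, 2, 4], [2, 1, 4, 3, 6, 3, 4, 1, 2], [(9, 7, False), (8, 6, False), (9, 0, True), (8, 1, True)]),
    ([1, 2, 1, 4, 3, 6, 3, 4, 1, 2, 1], [2, 1, 4, 3, 6, 3, 4, 1, 2], [(63, 0, False)]),
    ([2, 2, 1, 4, 3, 6, 3, 4, 1, 2, 2], [1, 4, 3, 6, 3, 4, 1], [(1, 9, False), (1, 0, False)]),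
    ([3, 2, 1, 4, 3, 6, 3, 4, 1, 2, 3], [3, 2, 1, 4, 3, 6, 3, 4, 1, 2, 3], []),
    ([4, 2, 1, 4, 3, 6, 3, 4, 1, 2, 4], [2, 1, 3, 6, 3, 1, 2], [(64, 0, False)]),
    ([1, 1, 6, 1, 1], [6], [(0, 3, False), (0, 0, False)]),
    ([2, 1, 6, 1, 2], [5], [(48, 0, False)]),
    ([3, 1, 6, 1, 3], [1, 3, 6, 3, 1], [(7, 3, False), (7, 0, True)]),
    ([4, 1, 6, 1, 4], [1, 6, 1], [(49, 0, False)]),
    ([1, 3, 2, 1, 4, 3, 6, 3, 4, 1, 2, 3, 1], [3, 2, 1, 4, 3, 6, 3, 4, 1, 2, 3], [(68, 0, False)]),
    ([2, 3, 2, 1, 4, 3, 6, 3, 4, 1, 2, 3, 2], [2, 3, 2, 1, 4, 3, 6, 3, 4, 1, 2, 3, 2], []),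
    ([3, 3, 2, 1, 4, 3, 6, 3, 4, 1, 2, 3, 3], [2, 1, 4, 3, 6, 3, 4, 1, 2], [(2, 11, False), (2, 0, False)]),
    ([4, 3, 2, 1, 4, 3, 6, 3, 4, 1, 2, 3, 4], [3, 2, 1, 4, 3, 6, 3, 4, 1, 2, 3], [(69, 0, False)]),
    ([1, 1, 3, 6, 3, 1, 1], [3, 6, 3], [(0, 5, False), (0, 0, False)]),
    ([2, 1, 3, 6, 3, 1, 2], [2, 1, 3, 6, 3, 1, 2], []),
    ([3, 1, 3, 6, 3, 1, 3], [1, 6, 1], [(53, 0, False)]),
    ([4, 1, 3, 6, 3, 1, 4], [1, 4, 3, 6, 3, 4, 1], [(8, 5, False), (8, 0, True)]),
    ([1, 1, 4, 3, 6, 3, 4, 1, 1], [4, 3, 6, 3, 4], [(0, 7, False), (0, 0, False)]),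
    ([2, 1, 4, 3, 6, 3, 4, 1, 2], [2, 1, 4, 3, 6, 3, 4, 1, 2], []),
    ([3, 1, 4, 3, 6, 3, 4, 1, 3], [1, 4, 3, 6, 3, 4, 1], [(56, 0, False)]),
    ([4, 1, 4, 3, 6, 3, 4, 1, 4], [1, 3, 6, 3, 1], [(57, 0, False)]),
    ([1, 5, 1], [5], [(41, 0, False)]),
    ([2, 5, 2], [1, 6, 1], [(25, 0, True)]),
    ([3, 5, 3], [5], [(42, 0, False)]),
    ([4, 5, 4], [5], [(43, 0, False)]),
    ([1, 2, 7, 2, 1], [1, 2, 7, 2, 1], []),
    ([2, 2, 7, 2, 2], [7], [(1, 3, False), (1, 0, False)]),
    ([3, 2, 7, 2, 3], [2, 7, 2], [(52, 0, False)]),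
    ([4, 2, 7, 2, 4], [2, 3, 8, 3, 2], [(9, 3, False), (9, 0, True), (27, 1, True)]),
    ([1, 2, 3, 8, 3, 2, 1], [1, 2, 3, 8, 3, 2, 1], []),
    ([2, 2, 3, 8, 3, 2, 2], [3, 8, 3], [(1, 5, False), (1, 0, False)]),
    ([3, 2, 3, 8, 3, 2, 3], [3, 2, 3, 8, 3, 2, 3], []),
    ([4, 2, 3, 8, 3, 2, 4], [2, 7, 2], [(54, 0, False)]),
    ([1, 6, 1], [1, 6, 1], []),
    ([2, 6, 2], [6], [(39, 0, False)]),
    ([3, 6, 3], [3, 6, 3], []),
    ([4, 6, 4], [6], [(40, 0, False)]),
    ([1, 3, 8, 3, 1], [3, 8, 3], [(44, 0, False)]),
    ([2, 3, 8, 3, 2], [2, 3, 8, 3, 2], []),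
    ([3, 3, 8, 3, 3], [8], [(2, 3, False), (2, 0, False)]),
    ([4, 3, 8, 3, 4], [7], [(45, 0, False)]),
    ([1, 7, 1], [7], [(34, 0, False)]),
    ([2, 7, 2], [2, 7, 2], []),
    ([3, 7, 3], [7], [(35, 0, False)]),
    ([4, 7, 4], [3, 8, 3], [(27, 0, True)]),
    ([1, 3, 2, 3, 8, 3, 2, 3, 1], [1, 3, 2, 3, 8, 3, 2, 3, 1], []),
    ([2, 3, 2, 3, 8, 3, 2, 3, 2], [3, 2, 3, 8, 3, 2, 3], [(61, 0, False)]),
    ([3, 3, 2, 3, 8, 3, 2, 3, 3], [2, 3, 8, 3, 2], [(2, 7, False), (2, 0, False)]),
    ([4, 3, 2, 3, 8, 3, 2, 3, 4], [3, 2, 3, 8, 3, 2, 3], [(62, 0, False)]),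
    ([1, 3, 6, 3, 1], [1, 3, 6, 3, 1], []),
    ([2, 3, 6, 3, 2], [3, 6, 3], [(47, 0, False)]),
    ([3, 3, 6, 3, 3], [6], [(2, 3, False), (2, 0, False)]),
    ([4, 3, 6, 3, 4], [4, 3, 6, 3, 4], []),
    ([1, 8, 1], [8], [(36, 0, False)]),
    ([2, 8, 2], [8], [(37, 0, False)]),
    ([3, 8, 3], [3, 8, 3], []),
    ([4, 8, 4], [8], [(38, 0, False)]),
    ([1, 4, 3, 6, 3, 4, 1], [1, 4, 3, 6, 3, 4, 1], []),
    ([2, 4, 3, 6, 3, 4, 2], [4, 3, 6, 3, 4], [(50, 0, False)]),
    ([3, 4, 3, 6, 3, 4, 3], [4, 3, 6, 3, 4], [(51, 0, False)]),
    ([4, 4, 3, 6, 3, 4, 4], [3, 6, 3], [(3, 5, False), (3, 0, False)]),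
    ([1, 4, 3, 6, 3, 4, 1], [1, 4, 3, 6, 3, 4, 1], []),
    ([2, 4, 3, 6, 3, 4, 2], [4, 3, 6, 3, 4], [(50, 0, False)]),
    ([3, 4, 3, 6, 3, 4, 3], [4, 3, 6, 3, 4], [(51, 0, False)]),
    ([4, 4, 3, 6, 3, 4, 4], [3, 6, 3], [(3, 5, False), (3, 0, False)]),
    ([1, 8, 1], [8], [(36, 0, False)]),
    ([2, 8, 2], [8], [(37, 0, False)]),
    ([3, 8, 3], [3, 8, 3], []),
    ([4, 8, 4], [8], [(38, 0, False)]),
    ([1, 3, 6, 3, 1], [1, 3, 6, 3, 1], []),
    ([2, 3, 6, 3, 2], [3, 6, 3], [(47, 0, False)]),
    ([3, 3, 6, 3, 3], [6], [(2, 3, False), (2, 0, False)]),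
    ([4, 3, 6, 3, 4], [4, 3, 6, 3, 4], []),
    ([1, 3, 2, 3, 8, 3, 2, 3, 1], [1, 3, 2, 3, 8, 3, 2, 3, 1], []),
    ([2, 3, 2, 3, 8, 3, 2, 3, 2], [3, 2, 3, 8, 3, 2, 3], [(61, 0, False)]),
    ([3, 3, 2, 3, 8, 3, 2, 3, 3], [2, 3, 8, 3, 2], [(2, 7, False), (2, 0, False)]),
    ([4, 3, 2, 3, 8, 3, 2, 3, 4], [3, 2, 3, 8, 3, 2, 3], [(62, 0, False)]),
    ([1, 7, 1], [7], [(34, 0, False)]),
    ([2, 7, 2], [2, 7, 2], []),
    ([3, 7, 3], [7], [(35, 0, False)]),
    ([4, 7, 4], [3, 8, 3], [(27, 0, True)]),
    ([1, 3, 8, 3, 1], [3, 8, 3], [(44, 0, False)]),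
    ([2, 3, 8, 3, 2], [2, 3, 8, 3, 2], []),
    ([3, 3, 8, 3, 3], [8], [(2, 3, False), (2, 0, False)]),
    ([4, 3, 8, 3, 4], [7], [(45, 0, False)]),
    ([1, 6, 1], [1, 6, 1], []),
    ([2, 6, 2], [6], [(39, 0, False)]),
    ([3, 6, 3], [3, 6, 3], []),
    ([4, 6, 4], [6], [(40, 0, False)]),
    ([1, 2, 3, 8, 3, 2, 1], [1, 2, 3, 8, 3, 2, 1], []),
    ([2, 2, 3, 8, 3, 2, 2], [3, 8, 3], [(1, 5, False), (1, 0, False)]),
    ([3, 2, 3, 8, 3, 2, 3], [3, 2, 3, 8, 3, 2, 3], []),
    ([4, 2, 3, 8, 3, 2, 4], [2, 7, 2], [(54, 0, False)]),
    ([1, 2, 7, 2, 1], [1, 2, 7, 2, 1], []),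
    ([2, 2, 7, 2, 2], [7], [(1, 3, False), (1, 0, False)]),
    ([3, 2, 7, 2, 3], [2, 7, 2], [(52, 0, False)]),
    ([4, 2, 7, 2, 4], [2, 3, 8, 3, 2], [(9, 3, False), (9, 0, True), (27, 1, True)]),
    ([1, 5, 1], [5], [(41, 0, False)]),
    ([2, 5, 2], [1, 6, 1], [(25, 0, True)]),
    ([3, 5, 3], [5], [(42, 0, False)]),
    ([4, 5, 4], [5], [(43, 0, False)]),
    ([1, 1, 4, 3, 6, 3, 4, 1, 1], [4, 3, 6, 3, 4], [(0, 7, False), (0, 0, False)]),
    ([2, 1, 4, 3, 6, 3, 4, 1, 2], [2, 1, 4, 3, 6, 3, 4, 1, 2], []),
    ([3, 1, 4, 3, 6, 3, 4, 1, 3], [1, 4, 3, 6, 3, 4, 1], [(56, 0, False)]),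
    ([4, 1, 4, 3, 6, 3, 4, 1, 4], [1, 3, 6, 3, 1], [(57, 0, False)]),
    ([1, 1, 3, 6, 3, 1, 1], [3, 6, 3], [(0, 5, False), (0, 0, False)]),
    ([2, 1, 3, 6, 3, 1, 2], [2, 1, 3, 6, 3, 1, 2], []),
    ([3, 1, 3, 6, 3, 1, 3], [1, 6, 1], [(53, 0, False)]),
    ([4, 1, 3, 6, 3, 1, 4], [1, 4, 3, 6, 3, 4, 1], [(8, 5, False), (8, 0, True)]),
    ([1, 3, 2, 1, 4, 3, 6, 3, 4, 1, 2, 3, 1], [3, 2, 1, 4, 3, 6, 3, 4, 1, 2, 3], [(68, 0, False)]),
    ([2, 3, 2, 1, 4, 3, 6, 3, 4, 1, 2, 3, 2], [2, 3, 2, 1, 4, 3, 6, 3, 4, 1, 2, 3, 2], []),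
    ([3, 3, 2, 1, 4, 3, 6, 3, 4, 1, 2, 3, 3], [2, 1, 4, 3, 6, 3, 4, 1, 2], [(2, 11, False), (2, 0, False)]),
    ([4, 3, 2, 1, 4, 3, 6, 3, 4, 1, 2, 3, 4], [3, 2, 1, 4, 3, 6, 3, 4, 1, 2, 3], [(69, 0, False)]),
    ([1, 1, 6, 1, 1], [6], [(0, 3, False), (0, 0, False)]),
    ([2, 1, 6, 1, 2], [5], [(48, 0, False)]),
    ([3, 1, 6, 1, 3], [1, 3, 6, 3, 1], [(7, 3, False), (7, 0, True)]),
    ([4, 1, 6, 1, 4], [1, 6, 1], [(49, 0, False)]),
    ([1, 2, 1, 4, 3, 6, 3, 4, 1, 2, 1], [2, 1, 4, 3, 6, 3, 4, 1, 2], [(63, 0, False)]),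
    ([2, 2, 1, 4, 3, 6, 3, 4, 1, 2, 2], [1, 4, 3, 6, 3, 4, 1], [(1, 9, False), (1, 0, False)]),
    ([3, 2, 1, 4, 3, 6, 3, 4, 1, 2, 3], [3, 2, 1, 4, 3, 6, 3, 4, 1, 2, 3], []),
    ([4, 2, 1, 4, 3, 6, 3, 4, 1, 2, 4], [2, 1, 3, 6, 3, 1, 2], [(64, 0, False)]),
    ([1, 2, 1, 3, 6, 3, 1, 2, 1], [2, 1, 3, 6, 3, 1, 2], [(59, 0, False)]),
    ([2, 2, 1, 3, 6, 3, 1, 2, 2], [1, 3, 6, 3, 1], [(1, 7, False), (1, 0, False)]),
    ([3, 2, 1, 3, 6, 3, 1, 2, 3], [2, 1, 3, 6, 3, 1, 2], [(60, 0, False)]),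
    ([4, 2, 1, 3, 6, 3, 1, 2, 4], [2, 1, 4, 3, 6, 3, 4, 1, 2], [(9, 7, False), (8, 6, False), (9, 0, True), (8, 1, True)]),
    ([1, 2, 3, 2, 1, 4, 3, 6, 3, 4, 1, 2, 3, 2, 1], [1, 2, 3, 2, 1, 4, 3, 6, 3, 4, 1, 2, 3, 2, 1], []),
    ([2, 2, 3, 2, 1, 4, 3, 6, 3, 4, 1, 2, 3, 2, 2], [3, 2, 1, 4, 3, 6, 3, 4, 1, 2, 3], [(1, 13, False), (1, 0, False)]),
    ([3, 2, 3, 2, 1, 4, 3, 6, 3, 4, 1, 2, 3, 2, 3], [2, 3, 2, 1, 4, 3, 6, 3, 4, 1, 2, 3, 2], [(72, 0, False)]),
    ([4, 2, 3, 2, 1, 4, 3, 6, 3, 4, 1, 2, 3, 2, 4], [2, 3, 2, 1, 4, 3, 6, 3, 4, 1, 2, 3, 2], [(73, 0, False)]),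
    ([1, 1, 3, 2, 3, 8, 3, 2, 3, 1, 1], [3, 2, 3, 8, 3, 2, 3], [(0, 9, False), (0, 0, False)]),
    ([2, 1, 3, 2, 3, 8, 3, 2, 3, 1, 2], [2, 1, 3, 2, 3, 8, 3, 2, 3, 1, 2], []),
    ([3, 1, 3, 2, 3, 8, 3, 2, 3, 1, 3], [1, 2, 3, 8, 3, 2, 1], [(74, 0, False)]),
    ([4, 1, 3, 2, 3, 8, 3, 2, 3, 1, 4], [1, 3, 2, 3, 8, 3, 2, 3, 1], [(75, 0, False)]),
    ([1, 1, 2, 3, 8, 3, 2, 1, 1], [2, 3, 8, 3, 2], [(0, 7, False), (0, 0, False)]),
    ([2, 1, 2, 3, 8, 3, 2, 1, 2], [1, 2, 3, 8, 3, 2, 1], [(70, 0, False)]),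
    ([3, 1, 2, 3, 8, 3, 2, 1, 3], [1, 3, 2, 3, 8, 3, 2, 3, 1], [(7, 7, False), (7, 0, True)]),
    ([4, 1, 2, 3, 8, 3, 2, 1, 4], [1, 2, 7, 2, 1], [(71, 0, False)]),
    ([1, 1, 2, 7, 2, 1, 1], [2, 7, 2], [(0, 5, False), (0, 0, False)]),
    ([2, 1, 2, 7, 2, 1, 2], [1, 2, 7, 2, 1], [(66, 0, False)]),
    ([3, 1, 2, 7, 2, 1, 3], [1, 2, 7, 2, 1], [(67, 0, False)]),
    ([4, 1, 2, 7, 2, 1, 4], [1, 2, 3, 8, 3, 2, 1], [(8, 5, False), (9, 4, False), (8, 0, True), (9, 1, True), (27, 2, True)]),
    ([1, 1, 2, 3, 2, 1, 4, 3, 6, 3, 4, 1, 2, 3, 2, 1, 1], [2, 3, 2, 1, 4, 3, 6, 3, 4, 1, 2, 3, 2], [(0, 15, False), (0, 0, False)]),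
    ([2, 1, 2, 3, 2, 1, 4, 3, 6, 3, 4, 1, 2, 3, 2, 1, 2], [1, 2, 3, 2, 1, 4, 3, 6, 3, 4, 1, 2, 3, 2, 1], [(76, 0, False)]),
    ([3, 1, 2, 3, 2, 1, 4, 3, 6, 3, 4, 1, 2, 3, 2, 1, 3], [1, 2, 3, 2, 1, 4, 3, 6, 3, 4, 1, 2, 3, 2, 1], [(77, 0, False)]),
    ([4, 1, 2, 3, 2, 1, 4, 3, 6, 3, 4, 1, 2, 3, 2, 1, 4], [1, 2, 3, 2, 1, 4, 3, 6, 3, 4, 1, 2, 3, 2, 1], [(78, 0, False)]),
    ([1, 4, 3, 2, 1, 3, 2, 3, 8, 3, 2, 3, 1, 2, 3, 4, 1], [4, 3, 2, 1, 3, 2, 3, 8, 3, 2, 3, 1, 2, 3, 4], [(83, 0, False)]),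
    ([2, 4, 3, 2, 1, 3, 2, 3, 8, 3, 2, 3, 1, 2, 3, 4, 2], [4, 3, 2, 1, 3, 2, 3, 8, 3, 2, 3, 1, 2, 3, 4], [(84, 0, False)]),
    ([3, 4, 3, 2, 1, 3, 2, 3, 8, 3, 2, 3, 1, 2, 3, 4, 3], [4, 3, 2, 1, 3, 2, 3, 8, 3, 2, 3, 1, 2, 3, 4], [(85, 0, False)]),
    ([4, 4, 3, 2, 1, 3, 2, 3, 8, 3, 2, 3, 1, 2, 3, 4, 4], [3, 2, 1, 3, 2, 3, 8, 3, 2, 3, 1, 2, 3], [(3, 15, False), (3, 0, False)]),
    ([1, 3, 2, 1, 3, 2, 3, 8, 3, 2, 3, 1, 2, 3, 1], [3, 2, 1, 3, 2, 3, 8, 3, 2, 3, 1, 2, 3], [(81, 0, False)]),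
    ([2, 3, 2, 1, 3, 2, 3, 8, 3, 2, 3, 1, 2, 3, 2], [3, 2, 1, 3, 2, 3, 8, 3, 2, 3, 1, 2, 3], [(82, 0, False)]),
    ([3, 3, 2, 1, 3, 2, 3, 8, 3, 2, 3, 1, 2, 3, 3], [2, 1, 3, 2, 3, 8, 3, 2, 3, 1, 2], [(2, 13, False), (2, 0, False)]),
    ([4, 3, 2, 1, 3, 2, 3, 8, 3, 2, 3, 1, 2, 3, 4], [4, 3, 2, 1, 3, 2, 3, 8, 3, 2, 3, 1, 2, 3, 4], []),
    ([1, 2, 1, 3, 2, 3, 8, 3, 2, 3, 1, 2, 1], [2, 1, 3, 2, 3, 8, 3, 2, 3, 1, 2], [(79, 0, False)]),
    ([2, 2, 1, 3, 2, 3, 8, 3, 2, 3, 1, 2, 2], [1, 3, 2, 3, 8, 3, 2, 3, 1], [(1, 11, False), (1, 0, False)]),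
    ([3, 2, 1, 3, 2, 3, 8, 3, 2, 3, 1, 2, 3], [3, 2, 1, 3, 2, 3, 8, 3, 2, 3, 1, 2, 3], []),
    ([4, 2, 1, 3, 2, 3, 8, 3, 2, 3, 1, 2, 4], [2, 1, 3, 2, 3, 8, 3, 2, 3, 1, 2], [(80, 0, False)]),
    ([7, 2, 7, 2], [2, 7, 2, 7], [(86, 0, False), (33, 1, False), (30, 0, True)]),
    ([5, 7], [7, 5], [(20, 0, False)])]"

definition ctab :: "((int list \<times> int list) \<times> nat list \<times> int list \<times> int list) list" where
  "ctab = [(([0, -2, 0, 2], [0, 0, 2, 0]), [3, 1, 2, 3, 4], [0, -2, 2, 0], [1, -1, -1, -1]),
    (([0, -2, 0, 2], [0, 2, 0, 2]), [4], [0, -2, 2, 0], [0, 2, 2, 0]),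
    (([0, -2, 0, 2], [1, -1, -1, -1]), [4], [0, -2, 2, 0], [1, -1, -1, -1]),
    (([0, -2, 0, 2], [1, -1, 1, -1]), [3, 2, 3, 4], [0, -2, 2, 0], [1, -1, -1, -1]),
    (([0, -2, 0, 2], [1, 1, -1, 1]), [4, 2, 3, 2], [0, -2, 2, 0], [1, -1, -1, -1]),
    (([0, -2, 0, 2], [1, 1, 1, 1]), [3, 2, 3, 4, 2, 3, 2], [0, -2, 2, 0], [1, -1, -1, -1]),
    (([0, -2, 0, 2], [2, 0, -2, 0]), [4, 1], [0, -2, 2, 0], [0, 2, 2, 0]),
    (([0, -2, 0, 2], [2, 0, 0, 0]), [3, 1, 2, 3, 4, 2, 3, 2], [0, -2, 2, 0], [1, -1, -1, -1]),
    (([0, -2, 0, 2], [2, 0, 2, 0]), [3, 2, 3, 4, 1], [0, -2, 2, 0], [0, 2, 2, 0]),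
    (([0, -2, 2, 0], [0, 0, 0, 2]), [4, 3, 1, 2, 3, 4], [0, -2, 2, 0], [1, -1, -1, -1]),
    (([0, -2, 2, 0], [0, 2, 2, 0]), [], [0, -2, 2, 0], [0, 2, 2, 0]),
    (([0, -2, 2, 0], [1, -1, -1, -1]), [], [0, -2, 2, 0], [1, -1, -1, -1]),
    (([0, -2, 2, 0], [1, -1, -1, 1]), [4, 3, 2, 3, 4], [0, -2, 2, 0], [1, -1, -1, -1]),
    (([0, -2, 2, 0], [1, 1, 1, -1]), [2, 3, 2], [0, -2, 2, 0], [1, -1, -1, -1]),
    (([0, -2, 2, 0], [1, 1, 1, 1]), [4, 3, 2, 3, 4, 2, 3, 2], [0, -2, 2, 0], [1, -1, -1, -1]),
    (([0, -2, 2, 0], [2, 0, 0, -2]), [1], [0, -2, 2, 0], [0, 2, 2, 0]),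
    (([0, -2, 2, 0], [2, 0, 0, 0]), [4, 3, 1, 2, 3, 4, 2, 3, 2], [0, -2, 2, 0], [1, -1, -1, -1]),
    (([0, -2, 2, 0], [2, 0, 0, 2]), [4, 3, 2, 3, 4, 1], [0, -2, 2, 0], [0, 2, 2, 0]),
    (([0, 0, -2, 2], [0, 0, 2, 2]), [3, 4], [0, -2, 2, 0], [0, 2, 2, 0]),
    (([0, 0, -2, 2], [0, 2, 0, 0]), [1, 2, 3, 4], [0, -2, 2, 0], [1, -1, -1, -1]),
    (([0, 0, -2, 2], [1, -1, -1, -1]), [3, 4], [0, -2, 2, 0], [1, -1, -1, -1]),
    (([0, 0, -2, 2], [1, -1, 1, 1]), [3, 4, 2, 3, 2], [0, -2, 2, 0], [1, -1, -1, -1]),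
    (([0, 0, -2, 2], [1, 1, -1, -1]), [2, 3, 4], [0, -2, 2, 0], [1, -1, -1, -1]),
    (([0, 0, -2, 2], [1, 1, 1, 1]), [2, 3, 4, 2, 3, 2], [0, -2, 2, 0], [1, -1, -1, -1]),
    (([0, 0, -2, 2], [2, -2, 0, 0]), [3, 4, 1], [0, -2, 2, 0], [0, 2, 2, 0]),
    (([0, 0, -2, 2], [2, 0, 0, 0]), [1, 2, 3, 4, 2, 3, 2], [0, -2, 2, 0], [1, -1, -1, -1]),
    (([0, 0, -2, 2], [2, 2, 0, 0]), [2, 3, 4, 1], [0, -2, 2, 0], [0, 2, 2, 0]),
    (([0, 0, 0, 2], [0, -2, 2, 0]), [4, 3, 1, 2, 3, 4], [1, -1, -1, -1], [0, -2, 2, 0]),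
    (([0, 0, 0, 2], [0, 2, 2, 0]), [4, 2, 3, 1, 2, 3, 4], [1, -1, -1, -1], [0, -2, 2, 0]),
    (([0, 0, 0, 2], [2, -2, 0, 0]), [3, 4, 3, 1, 2], [1, -1, -1, -1], [0, -2, 2, 0]),
    (([0, 0, 0, 2], [2, 0, -2, 0]), [4, 3, 1, 2], [1, -1, -1, -1], [0, -2, 2, 0]),
    (([0, 0, 0, 2], [2, 0, 2, 0]), [3, 2, 3, 4, 3, 1, 2], [1, -1, -1, -1], [0, -2, 2, 0]),
    (([0, 0, 0, 2], [2, 2, 0, 0]), [2, 3, 4, 3, 1, 2], [1, -1, -1, -1], [0, -2, 2, 0]),
    (([0, 0, 2, 0], [0, -2, 0, 2]), [3, 1, 2, 3, 4], [1, -1, -1, -1], [0, -2, 2, 0]),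
    (([0, 0, 2, 0], [0, 2, 0, 2]), [2, 3, 1, 2, 3, 4], [1, -1, -1, -1], [0, -2, 2, 0]),
    (([0, 0, 2, 0], [2, -2, 0, 0]), [3, 4, 1, 2], [1, -1, -1, -1], [0, -2, 2, 0]),
    (([0, 0, 2, 0], [2, 0, 0, -2]), [3, 1, 2], [1, -1, -1, -1], [0, -2, 2, 0]),
    (([0, 0, 2, 0], [2, 0, 0, 2]), [4, 3, 2, 3, 4, 3, 1, 2], [1, -1, -1, -1], [0, -2, 2, 0]),
    (([0, 0, 2, 0], [2, 2, 0, 0]), [2, 3, 4, 1, 2], [1, -1, -1, -1], [0, -2, 2, 0]),
    (([0, 0, 2, 2], [0, 0, -2, 2]), [3, 4], [0, 2, 2, 0], [0, -2, 2, 0]),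
    (([0, 0, 2, 2], [0, 2, 0, 0]), [3, 2, 3, 1, 2, 3, 4], [0, -2, 2, 0], [1, -1, -1, -1]),
    (([0, 0, 2, 2], [1, -1, -1, 1]), [3, 4, 3, 2], [0, -2, 2, 0], [1, -1, -1, -1]),
    (([0, 0, 2, 2], [1, -1, 1, -1]), [3, 4, 2], [0, -2, 2, 0], [1, -1, -1, -1]),
    (([0, 0, 2, 2], [1, 1, -1, 1]), [2, 3, 4, 3, 2], [0, -2, 2, 0], [1, -1, -1, -1]),
    (([0, 0, 2, 2], [1, 1, 1, -1]), [2, 3, 4, 2], [0, -2, 2, 0], [1, -1, -1, -1]),
    (([0, 0, 2, 2], [2, -2, 0, 0]), [3, 4, 2, 1], [0, -2, 2, 0], [0, 2, 2, 0]),
    (([0, 0, 2, 2], [2, 0, 0, 0]), [3, 2, 3, 1, 2, 3, 4, 2, 3, 2], [0, -2, 2, 0], [1, -1, -1, -1]),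
    (([0, 0, 2, 2], [2, 2, 0, 0]), [2, 3, 4, 2, 1], [0, -2, 2, 0], [0, 2, 2, 0]),
    (([0, 2, 0, 0], [0, 0, -2, 2]), [1, 2, 3, 4], [1, -1, -1, -1], [0, -2, 2, 0]),
    (([0, 2, 0, 0], [0, 0, 2, 2]), [3, 2, 3, 1, 2, 3, 4], [1, -1, -1, -1], [0, -2, 2, 0]),
    (([0, 2, 0, 0], [2, 0, -2, 0]), [4, 1, 2], [1, -1, -1, -1], [0, -2, 2, 0]),
    (([0, 2, 0, 0], [2, 0, 0, -2]), [1, 2], [1, -1, -1, -1], [0, -2, 2, 0]),
    (([0, 2, 0, 0], [2, 0, 0, 2]), [4, 3, 2, 3, 4, 1, 2], [1, -1, -1, -1], [0, -2, 2, 0]),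
    (([0, 2, 0, 0], [2, 0, 2, 0]), [3, 2, 3, 4, 1, 2], [1, -1, -1, -1], [0, -2, 2, 0]),
    (([0, 2, 0, 2], [0, -2, 0, 2]), [4], [0, 2, 2, 0], [0, -2, 2, 0]),
    (([0, 2, 0, 2], [0, 0, 2, 0]), [2, 3, 1, 2, 3, 4], [0, -2, 2, 0], [1, -1, -1, -1]),
    (([0, 2, 0, 2], [1, -1, -1, 1]), [4, 3, 2], [0, -2, 2, 0], [1, -1, -1, -1]),
    (([0, 2, 0, 2], [1, -1, 1, 1]), [3, 2, 3, 4, 3, 2], [0, -2, 2, 0], [1, -1, -1, -1]),
    (([0, 2, 0, 2], [1, 1, -1, -1]), [4, 2], [0, -2, 2, 0], [1, -1, -1, -1]),
    (([0, 2, 0, 2], [1, 1, 1, -1]), [3, 2, 3, 4, 2], [0, -2, 2, 0], [1, -1, -1, -1]),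
    (([0, 2, 0, 2], [2, 0, -2, 0]), [4, 2, 1], [0, -2, 2, 0], [0, 2, 2, 0]),
    (([0, 2, 0, 2], [2, 0, 0, 0]), [2, 3, 1, 2, 3, 4, 2, 3, 2], [0, -2, 2, 0], [1, -1, -1, -1]),
    (([0, 2, 0, 2], [2, 0, 2, 0]), [3, 2, 3, 4, 2, 1], [0, -2, 2, 0], [0, 2, 2, 0]),
    (([0, 2, 2, 0], [0, -2, 2, 0]), [], [0, 2, 2, 0], [0, -2, 2, 0]),
    (([0, 2, 2, 0], [0, 0, 0, 2]), [4, 2, 3, 1, 2, 3, 4], [0, -2, 2, 0], [1, -1, -1, -1]),
    (([0, 2, 2, 0], [1, -1, 1, -1]), [3, 2], [0, -2, 2, 0], [1, -1, -1, -1]),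
    (([0, 2, 2, 0], [1, -1, 1, 1]), [4, 3, 2, 3, 4, 3, 2], [0, -2, 2, 0], [1, -1, -1, -1]),
    (([0, 2, 2, 0], [1, 1, -1, -1]), [2], [0, -2, 2, 0], [1, -1, -1, -1]),
    (([0, 2, 2, 0], [1, 1, -1, 1]), [4, 3, 2, 3, 4, 2], [0, -2, 2, 0], [1, -1, -1, -1]),
    (([0, 2, 2, 0], [2, 0, 0, -2]), [2, 1], [0, -2, 2, 0], [0, 2, 2, 0]),
    (([0, 2, 2, 0], [2, 0, 0, 0]), [4, 2, 3, 1, 2, 3, 4, 2, 3, 2], [0, -2, 2, 0], [1, -1, -1, -1]),
    (([0, 2, 2, 0], [2, 0, 0, 2]), [4, 3, 2, 3, 4, 2, 1], [0, -2, 2, 0], [0, 2, 2, 0]),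
    (([1, -1, -1, -1], [0, -2, 0, 2]), [4], [1, -1, -1, -1], [0, -2, 2, 0]),
    (([1, -1, -1, -1], [0, -2, 2, 0]), [], [1, -1, -1, -1], [0, -2, 2, 0]),
    (([1, -1, -1, -1], [0, 0, -2, 2]), [3, 4], [1, -1, -1, -1], [0, -2, 2, 0]),
    (([1, -1, -1, -1], [2, 0, 0, 2]), [4, 2, 3, 1, 2, 3, 4, 1, 2], [1, -1, -1, -1], [0, -2, 2, 0]),
    (([1, -1, -1, -1], [2, 0, 2, 0]), [2, 3, 1, 2, 3, 4, 1, 2], [1, -1, -1, -1], [0, -2, 2, 0]),
    (([1, -1, -1, -1], [2, 2, 0, 0]), [3, 2, 3, 1, 2, 3, 4, 1, 2], [1, -1, -1, -1], [0, -2, 2, 0]),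
    (([1, -1, -1, 1], [0, -2, 2, 0]), [4, 3, 2, 3, 4], [1, -1, -1, -1], [0, -2, 2, 0]),
    (([1, -1, -1, 1], [0, 0, 2, 2]), [3, 4, 3, 2], [1, -1, -1, -1], [0, -2, 2, 0]),
    (([1, -1, -1, 1], [0, 2, 0, 2]), [4, 3, 2], [1, -1, -1, -1], [0, -2, 2, 0]),
    (([1, -1, -1, 1], [2, 0, 0, -2]), [4, 2, 3, 1, 2, 3, 4, 2], [1, -1, -1, -1], [0, -2, 2, 0]),
    (([1, -1, -1, 1], [2, 0, 2, 0]), [3, 1, 2, 3, 4, 3, 1, 2], [1, -1, -1, -1], [0, -2, 2, 0]),
    (([1, -1, -1, 1], [2, 2, 0, 0]), [1, 2, 3, 4, 3, 1, 2], [1, -1, -1, -1], [0, -2, 2, 0]),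
    (([1, -1, 1, -1], [0, -2, 0, 2]), [3, 2, 3, 4], [1, -1, -1, -1], [0, -2, 2, 0]),
    (([1, -1, 1, -1], [0, 0, 2, 2]), [3, 4, 2], [1, -1, -1, -1], [0, -2, 2, 0]),
    (([1, -1, 1, -1], [0, 2, 2, 0]), [3, 2], [1, -1, -1, -1], [0, -2, 2, 0]),
    (([1, -1, 1, -1], [2, 0, -2, 0]), [2, 3, 1, 2, 3, 4, 2], [1, -1, -1, -1], [0, -2, 2, 0]),
    (([1, -1, 1, -1], [2, 0, 0, 2]), [4, 3, 1, 2, 3, 4, 3, 1, 2], [1, -1, -1, -1], [0, -2, 2, 0]),
    (([1, -1, 1, -1], [2, 2, 0, 0]), [1, 2, 3, 4, 1, 2], [1, -1, -1, -1], [0, -2, 2, 0]),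
    (([1, -1, 1, 1], [0, 0, -2, 2]), [3, 4, 2, 3, 2], [1, -1, -1, -1], [0, -2, 2, 0]),
    (([1, -1, 1, 1], [0, 2, 0, 2]), [3, 2, 3, 4, 3, 2], [1, -1, -1, -1], [0, -2, 2, 0]),
    (([1, -1, 1, 1], [0, 2, 2, 0]), [4, 3, 2, 3, 4, 3, 2], [1, -1, -1, -1], [0, -2, 2, 0]),
    (([1, -1, 1, 1], [2, 0, -2, 0]), [3, 1, 2, 3, 4, 3, 2], [1, -1, -1, -1], [0, -2, 2, 0]),
    (([1, -1, 1, 1], [2, 0, 0, -2]), [4, 3, 1, 2, 3, 4, 3, 2], [1, -1, -1, -1], [0, -2, 2, 0]),
    (([1, -1, 1, 1], [2, 2, 0, 0]), [3, 2, 3, 1, 2, 3, 4, 3, 1, 2], [1, -1, -1, -1], [0, -2, 2, 0]),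
    (([1, 1, -1, -1], [0, 0, -2, 2]), [2, 3, 4], [1, -1, -1, -1], [0, -2, 2, 0]),
    (([1, 1, -1, -1], [0, 2, 0, 2]), [4, 2], [1, -1, -1, -1], [0, -2, 2, 0]),
    (([1, 1, -1, -1], [0, 2, 2, 0]), [2], [1, -1, -1, -1], [0, -2, 2, 0]),
    (([1, 1, -1, -1], [2, -2, 0, 0]), [3, 2, 3, 1, 2, 3, 4, 2], [1, -1, -1, -1], [0, -2, 2, 0]),
    (([1, 1, -1, -1], [2, 0, 0, 2]), [4, 3, 1, 2, 3, 4, 1, 2], [1, -1, -1, -1], [0, -2, 2, 0]),
    (([1, 1, -1, -1], [2, 0, 2, 0]), [3, 1, 2, 3, 4, 1, 2], [1, -1, -1, -1], [0, -2, 2, 0]),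
    (([1, 1, -1, 1], [0, -2, 0, 2]), [4, 2, 3, 2], [1, -1, -1, -1], [0, -2, 2, 0]),
    (([1, 1, -1, 1], [0, 0, 2, 2]), [2, 3, 4, 3, 2], [1, -1, -1, -1], [0, -2, 2, 0]),
    (([1, 1, -1, 1], [0, 2, 2, 0]), [4, 3, 2, 3, 4, 2], [1, -1, -1, -1], [0, -2, 2, 0]),
    (([1, 1, -1, 1], [2, -2, 0, 0]), [1, 2, 3, 4, 3, 2], [1, -1, -1, -1], [0, -2, 2, 0]),
    (([1, 1, -1, 1], [2, 0, 0, -2]), [4, 3, 1, 2, 3, 4, 2], [1, -1, -1, -1], [0, -2, 2, 0]),
    (([1, 1, -1, 1], [2, 0, 2, 0]), [2, 3, 1, 2, 3, 4, 3, 1, 2], [1, -1, -1, -1], [0, -2, 2, 0]),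
    (([1, 1, 1, -1], [0, -2, 2, 0]), [2, 3, 2], [1, -1, -1, -1], [0, -2, 2, 0]),
    (([1, 1, 1, -1], [0, 0, 2, 2]), [2, 3, 4, 2], [1, -1, -1, -1], [0, -2, 2, 0]),
    (([1, 1, 1, -1], [0, 2, 0, 2]), [3, 2, 3, 4, 2], [1, -1, -1, -1], [0, -2, 2, 0]),
    (([1, 1, 1, -1], [2, -2, 0, 0]), [1, 2, 3, 4, 2], [1, -1, -1, -1], [0, -2, 2, 0]),
    (([1, 1, 1, -1], [2, 0, -2, 0]), [3, 1, 2, 3, 4, 2], [1, -1, -1, -1], [0, -2, 2, 0]),
    (([1, 1, 1, -1], [2, 0, 0, 2]), [4, 2, 3, 1, 2, 3, 4, 3, 1, 2], [1, -1, -1, -1], [0, -2, 2, 0]),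
    (([1, 1, 1, 1], [0, -2, 0, 2]), [3, 2, 3, 4, 2, 3, 2], [1, -1, -1, -1], [0, -2, 2, 0]),
    (([1, 1, 1, 1], [0, -2, 2, 0]), [4, 3, 2, 3, 4, 2, 3, 2], [1, -1, -1, -1], [0, -2, 2, 0]),
    (([1, 1, 1, 1], [0, 0, -2, 2]), [2, 3, 4, 2, 3, 2], [1, -1, -1, -1], [0, -2, 2, 0]),
    (([1, 1, 1, 1], [2, -2, 0, 0]), [3, 2, 3, 1, 2, 3, 4, 3, 2], [1, -1, -1, -1], [0, -2, 2, 0]),
    (([1, 1, 1, 1], [2, 0, -2, 0]), [2, 3, 1, 2, 3, 4, 3, 2], [1, -1, -1, -1], [0, -2, 2, 0]),
    (([1, 1, 1, 1], [2, 0, 0, -2]), [4, 2, 3, 1, 2, 3, 4, 3, 2], [1, -1, -1, -1], [0, -2, 2, 0]),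
    (([2, -2, 0, 0], [0, 0, -2, 2]), [3, 4, 1], [0, 2, 2, 0], [0, -2, 2, 0]),
    (([2, -2, 0, 0], [0, 0, 0, 2]), [3, 4, 3, 1, 2], [0, -2, 2, 0], [1, -1, -1, -1]),
    (([2, -2, 0, 0], [0, 0, 2, 0]), [3, 4, 1, 2], [0, -2, 2, 0], [1, -1, -1, -1]),
    (([2, -2, 0, 0], [0, 0, 2, 2]), [3, 4, 2, 1], [0, 2, 2, 0], [0, -2, 2, 0]),
    (([2, -2, 0, 0], [1, 1, -1, -1]), [3, 2, 3, 1, 2, 3, 4, 2], [0, -2, 2, 0], [1, -1, -1, -1]),
    (([2, -2, 0, 0], [1, 1, -1, 1]), [1, 2, 3, 4, 3, 2], [0, -2, 2, 0], [1, -1, -1, -1]),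
    (([2, -2, 0, 0], [1, 1, 1, -1]), [1, 2, 3, 4, 2], [0, -2, 2, 0], [1, -1, -1, -1]),
    (([2, -2, 0, 0], [1, 1, 1, 1]), [3, 2, 3, 1, 2, 3, 4, 3, 2], [0, -2, 2, 0], [1, -1, -1, -1]),
    (([2, -2, 0, 0], [2, 2, 0, 0]), [1, 2, 3, 4, 2, 1], [0, -2, 2, 0], [0, 2, 2, 0]),
    (([2, 0, -2, 0], [0, -2, 0, 2]), [4, 1], [0, 2, 2, 0], [0, -2, 2, 0]),
    (([2, 0, -2, 0], [0, 0, 0, 2]), [4, 3, 1, 2], [0, -2, 2, 0], [1, -1, -1, -1]),
    (([2, 0, -2, 0], [0, 2, 0, 0]), [4, 1, 2], [0, -2, 2, 0], [1, -1, -1, -1]),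
    (([2, 0, -2, 0], [0, 2, 0, 2]), [4, 2, 1], [0, 2, 2, 0], [0, -2, 2, 0]),
    (([2, 0, -2, 0], [1, -1, 1, -1]), [2, 3, 1, 2, 3, 4, 2], [0, -2, 2, 0], [1, -1, -1, -1]),
    (([2, 0, -2, 0], [1, -1, 1, 1]), [3, 1, 2, 3, 4, 3, 2], [0, -2, 2, 0], [1, -1, -1, -1]),
    (([2, 0, -2, 0], [1, 1, 1, -1]), [3, 1, 2, 3, 4, 2], [0, -2, 2, 0], [1, -1, -1, -1]),
    (([2, 0, -2, 0], [1, 1, 1, 1]), [2, 3, 1, 2, 3, 4, 3, 2], [0, -2, 2, 0], [1, -1, -1, -1]),
    (([2, 0, -2, 0], [2, 0, 2, 0]), [3, 1, 2, 3, 4, 2, 1], [0, -2, 2, 0], [0, 2, 2, 0]),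
    (([2, 0, 0, -2], [0, -2, 2, 0]), [1], [0, 2, 2, 0], [0, -2, 2, 0]),
    (([2, 0, 0, -2], [0, 0, 2, 0]), [3, 1, 2], [0, -2, 2, 0], [1, -1, -1, -1]),
    (([2, 0, 0, -2], [0, 2, 0, 0]), [1, 2], [0, -2, 2, 0], [1, -1, -1, -1]),
    (([2, 0, 0, -2], [0, 2, 2, 0]), [2, 1], [0, 2, 2, 0], [0, -2, 2, 0]),
    (([2, 0, 0, -2], [1, -1, -1, 1]), [4, 2, 3, 1, 2, 3, 4, 2], [0, -2, 2, 0], [1, -1, -1, -1]),
    (([2, 0, 0, -2], [1, -1, 1, 1]), [4, 3, 1, 2, 3, 4, 3, 2], [0, -2, 2, 0], [1, -1, -1, -1]),
    (([2, 0, 0, -2], [1, 1, -1, 1]), [4, 3, 1, 2, 3, 4, 2], [0, -2, 2, 0], [1, -1, -1, -1]),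
    (([2, 0, 0, -2], [1, 1, 1, 1]), [4, 2, 3, 1, 2, 3, 4, 3, 2], [0, -2, 2, 0], [1, -1, -1, -1]),
    (([2, 0, 0, -2], [2, 0, 0, 2]), [4, 3, 1, 2, 3, 4, 2, 1], [0, -2, 2, 0], [0, 2, 2, 0]),
    (([2, 0, 0, 0], [0, -2, 0, 2]), [3, 1, 2, 3, 4, 2, 3, 2], [1, -1, -1, -1], [0, -2, 2, 0]),
    (([2, 0, 0, 0], [0, -2, 2, 0]), [4, 3, 1, 2, 3, 4, 2, 3, 2], [1, -1, -1, -1], [0, -2, 2, 0]),
    (([2, 0, 0, 0], [0, 0, -2, 2]), [1, 2, 3, 4, 2, 3, 2], [1, -1, -1, -1], [0, -2, 2, 0]),
    (([2, 0, 0, 0], [0, 0, 2, 2]), [3, 2, 3, 1, 2, 3, 4, 2, 3, 2], [1, -1, -1, -1], [0, -2, 2, 0]),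
    (([2, 0, 0, 0], [0, 2, 0, 2]), [2, 3, 1, 2, 3, 4, 2, 3, 2], [1, -1, -1, -1], [0, -2, 2, 0]),
    (([2, 0, 0, 0], [0, 2, 2, 0]), [4, 2, 3, 1, 2, 3, 4, 2, 3, 2], [1, -1, -1, -1], [0, -2, 2, 0]),
    (([2, 0, 0, 2], [0, -2, 2, 0]), [4, 3, 2, 3, 4, 1], [0, 2, 2, 0], [0, -2, 2, 0]),
    (([2, 0, 0, 2], [0, 0, 2, 0]), [4, 3, 2, 3, 4, 3, 1, 2], [0, -2, 2, 0], [1, -1, -1, -1]),
    (([2, 0, 0, 2], [0, 2, 0, 0]), [4, 3, 2, 3, 4, 1, 2], [0, -2, 2, 0], [1, -1, -1, -1]),
    (([2, 0, 0, 2], [0, 2, 2, 0]), [4, 3, 2, 3, 4, 2, 1], [0, 2, 2, 0], [0, -2, 2, 0]),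
    (([2, 0, 0, 2], [1, -1, -1, -1]), [4, 2, 3, 1, 2, 3, 4, 1, 2], [0, -2, 2, 0], [1, -1, -1, -1]),
    (([2, 0, 0, 2], [1, -1, 1, -1]), [4, 3, 1, 2, 3, 4, 3, 1, 2], [0, -2, 2, 0], [1, -1, -1, -1]),
    (([2, 0, 0, 2], [1, 1, -1, -1]), [4, 3, 1, 2, 3, 4, 1, 2], [0, -2, 2, 0], [1, -1, -1, -1]),
    (([2, 0, 0, 2], [1, 1, 1, -1]), [4, 2, 3, 1, 2, 3, 4, 3, 1, 2], [0, -2, 2, 0], [1, -1, -1, -1]),
    (([2, 0, 0, 2], [2, 0, 0, -2]), [4, 3, 1, 2, 3, 4, 2, 1], [0, 2, 2, 0], [0, -2, 2, 0]),
    (([2, 0, 2, 0], [0, -2, 0, 2]), [3, 2, 3, 4, 1], [0, 2, 2, 0], [0, -2, 2, 0]),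
    (([2, 0, 2, 0], [0, 0, 0, 2]), [3, 2, 3, 4, 3, 1, 2], [0, -2, 2, 0], [1, -1, -1, -1]),
    (([2, 0, 2, 0], [0, 2, 0, 0]), [3, 2, 3, 4, 1, 2], [0, -2, 2, 0], [1, -1, -1, -1]),
    (([2, 0, 2, 0], [0, 2, 0, 2]), [3, 2, 3, 4, 2, 1], [0, 2, 2, 0], [0, -2, 2, 0]),
    (([2, 0, 2, 0], [1, -1, -1, -1]), [2, 3, 1, 2, 3, 4, 1, 2], [0, -2, 2, 0], [1, -1, -1, -1]),
    (([2, 0, 2, 0], [1, -1, -1, 1]), [3, 1, 2, 3, 4, 3, 1, 2], [0, -2, 2, 0], [1, -1, -1, -1]),
    (([2, 0, 2, 0], [1, 1, -1, -1]), [3, 1, 2, 3, 4, 1, 2], [0, -2, 2, 0], [1, -1, -1, -1]),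
    (([2, 0, 2, 0], [1, 1, -1, 1]), [2, 3, 1, 2, 3, 4, 3, 1, 2], [0, -2, 2, 0], [1, -1, -1, -1]),
    (([2, 0, 2, 0], [2, 0, -2, 0]), [3, 1, 2, 3, 4, 2, 1], [0, 2, 2, 0], [0, -2, 2, 0]),
    (([2, 2, 0, 0], [0, 0, -2, 2]), [2, 3, 4, 1], [0, 2, 2, 0], [0, -2, 2, 0]),
    (([2, 2, 0, 0], [0, 0, 0, 2]), [2, 3, 4, 3, 1, 2], [0, -2, 2, 0], [1, -1, -1, -1]),
    (([2, 2, 0, 0], [0, 0, 2, 0]), [2, 3, 4, 1, 2], [0, -2, 2, 0], [1, -1, -1, -1]),
    (([2, 2, 0, 0], [0, 0, 2, 2]), [2, 3, 4, 2, 1], [0, 2, 2, 0], [0, -2, 2, 0]),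
    (([2, 2, 0, 0], [1, -1, -1, -1]), [3, 2, 3, 1, 2, 3, 4, 1, 2], [0, -2, 2, 0], [1, -1, -1, -1]),
    (([2, 2, 0, 0], [1, -1, -1, 1]), [1, 2, 3, 4, 3, 1, 2], [0, -2, 2, 0], [1, -1, -1, -1]),
    (([2, 2, 0, 0], [1, -1, 1, -1]), [1, 2, 3, 4, 1, 2], [0, -2, 2, 0], [1, -1, -1, -1]),
    (([2, 2, 0, 0], [1, -1, 1, 1]), [3, 2, 3, 1, 2, 3, 4, 3, 1, 2], [0, -2, 2, 0], [1, -1, -1, -1]),
    (([2, 2, 0, 0], [2, -2, 0, 0]), [1, 2, 3, 4, 2, 1], [0, 2, 2, 0], [0, -2, 2, 0])]"

definition ptab :: "((int list \<times> int list) \<times> (int list \<times> nat list \<times> nat) \<times> (int list \<times> nat list \<times> nat)) list" where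
  "ptab = [(([0, 0, 0, 2], [0, 0, 2, 0]), ([0, 1, 0, 1, 1, 0], [5, 4], 2), ([0, 0, 0, 1, 1, 0], [5], 4)),
    (([0, 0, 0, 2], [0, 2, 0, 0]), ([0, 1, 0, 1, 1, 0], [5, 4], 2), ([0, 0, 0, 0, 1, 0], [], 5)),
    (([0, 0, 0, 2], [2, 0, 0, 0]), ([0, 1, 0, 1, 1, 0], [5, 4], 2), ([1, 1, 1, 2, 2, 1], [5, 6, 4, 5, 2, 4, 3], 1)),
    (([0, 0, 2, 0], [0, 0, 0, 2]), ([0, 0, 0, 1, 1, 0], [5], 4), ([0, 1, 0, 1, 1, 0], [5, 4], 2)),
    (([0, 0, 2, 0], [0, 2, 0, 0]), ([0, 0, 0, 1, 1, 0], [5], 4), ([0, 0, 0, 0, 1, 0], [], 5)),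
    (([0, 0, 2, 0], [2, 0, 0, 0]), ([0, 0, 0, 1, 1, 0], [5], 4), ([1, 1, 1, 2, 2, 1], [5, 6, 4, 5, 2, 4, 3], 1)),
    (([0, 2, 0, 0], [0, 0, 0, 2]), ([0, 0, 0, 0, 1, 0], [], 5), ([0, 1, 0, 1, 1, 0], [5, 4], 2)),
    (([0, 2, 0, 0], [0, 0, 2, 0]), ([0, 0, 0, 0, 1, 0], [], 5), ([0, 0, 0, 1, 1, 0], [5], 4)),
    (([0, 2, 0, 0], [2, 0, 0, 0]), ([0, 0, 0, 0, 1, 0], [], 5), ([1, 1, 1, 2, 2, 1], [5, 6, 4, 5, 2, 4, 3], 1)),
    (([1, -1, -1, -1], [1, -1, 1, 1]), ([0, 0, 0, 0, 0, 1], [], 6), ([0, 1, 1, 2, 1, 1], [6, 4, 5, 3, 4], 2)),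
    (([1, -1, -1, -1], [1, 1, -1, 1]), ([0, 0, 0, 0, 0, 1], [], 6), ([0, 1, 1, 1, 1, 1], [6, 5, 3, 4], 2)),
    (([1, -1, -1, -1], [1, 1, 1, -1]), ([0, 0, 0, 0, 0, 1], [], 6), ([0, 0, 1, 1, 1, 1], [6, 5, 4], 3)),
    (([1, -1, -1, 1], [1, -1, 1, -1]), ([0, 1, 0, 1, 1, 1], [6, 5, 4], 2), ([0, 0, 0, 1, 1, 1], [6, 5], 4)),
    (([1, -1, -1, 1], [1, 1, -1, -1]), ([0, 1, 0, 1, 1, 1], [6, 5, 4], 2), ([0, 0, 0, 0, 1, 1], [6], 5)),
    (([1, -1, -1, 1], [1, 1, 1, 1]), ([0, 1, 0, 1, 1, 1], [6, 5, 4], 2), ([0, 1, 1, 2, 2, 1], [5, 6, 4, 5, 3, 4], 2)),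
    (([1, -1, 1, -1], [1, -1, -1, 1]), ([0, 0, 0, 1, 1, 1], [6, 5], 4), ([0, 1, 0, 1, 1, 1], [6, 5, 4], 2)),
    (([1, -1, 1, -1], [1, 1, -1, -1]), ([0, 0, 0, 1, 1, 1], [6, 5], 4), ([0, 0, 0, 0, 1, 1], [6], 5)),
    (([1, -1, 1, -1], [1, 1, 1, 1]), ([0, 0, 0, 1, 1, 1], [6, 5], 4), ([0, 1, 1, 2, 2, 1], [5, 6, 4, 5, 3, 4], 2)),
    (([1, -1, 1, 1], [1, -1, -1, -1]), ([0, 1, 1, 2, 1, 1], [6, 4, 5, 3, 4], 2), ([0, 0, 0, 0, 0, 1], [], 6)),
    (([1, -1, 1, 1], [1, 1, -1, 1]), ([0, 1, 1, 2, 1, 1], [6, 4, 5, 3, 4], 2), ([0, 1, 1, 1, 1, 1], [6, 5, 3, 4], 2)),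
    (([1, -1, 1, 1], [1, 1, 1, -1]), ([0, 1, 1, 2, 1, 1], [6, 4, 5, 3, 4], 2), ([0, 0, 1, 1, 1, 1], [6, 5, 4], 3)),
    (([1, 1, -1, -1], [1, -1, -1, 1]), ([0, 0, 0, 0, 1, 1], [6], 5), ([0, 1, 0, 1, 1, 1], [6, 5, 4], 2)),
    (([1, 1, -1, -1], [1, -1, 1, -1]), ([0, 0, 0, 0, 1, 1], [6], 5), ([0, 0, 0, 1, 1, 1], [6, 5], 4)),
    (([1, 1, -1, -1], [1, 1, 1, 1]), ([0, 0, 0, 0, 1, 1], [6], 5), ([0, 1, 1, 2, 2, 1], [5, 6, 4, 5, 3, 4], 2)),
    (([1, 1, -1, 1], [1, -1, -1, -1]), ([0, 1, 1, 1, 1, 1], [6, 5, 3, 4], 2), ([0, 0, 0, 0, 0, 1], [], 6)),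
    (([1, 1, -1, 1], [1, -1, 1, 1]), ([0, 1, 1, 1, 1, 1], [6, 5, 3, 4], 2), ([0, 1, 1, 2, 1, 1], [6, 4, 5, 3, 4], 2)),
    (([1, 1, -1, 1], [1, 1, 1, -1]), ([0, 1, 1, 1, 1, 1], [6, 5, 3, 4], 2), ([0, 0, 1, 1, 1, 1], [6, 5, 4], 3)),
    (([1, 1, 1, -1], [1, -1, -1, -1]), ([0, 0, 1, 1, 1, 1], [6, 5, 4], 3), ([0, 0, 0, 0, 0, 1], [], 6)),
    (([1, 1, 1, -1], [1, -1, 1, 1]), ([0, 0, 1, 1, 1, 1], [6, 5, 4], 3), ([0, 1, 1, 2, 1, 1], [6, 4, 5, 3, 4], 2)),
    (([1, 1, 1, -1], [1, 1, -1, 1]), ([0, 0, 1, 1, 1, 1], [6, 5, 4], 3), ([0, 1, 1, 1, 1, 1], [6, 5, 3, 4], 2)),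
    (([1, 1, 1, 1], [1, -1, -1, 1]), ([0, 1, 1, 2, 2, 1], [5, 6, 4, 5, 3, 4], 2), ([0, 1, 0, 1, 1, 1], [6, 5, 4], 2)),
    (([1, 1, 1, 1], [1, -1, 1, -1]), ([0, 1, 1, 2, 2, 1], [5, 6, 4, 5, 3, 4], 2), ([0, 0, 0, 1, 1, 1], [6, 5], 4)),
    (([1, 1, 1, 1], [1, 1, -1, -1]), ([0, 1, 1, 2, 2, 1], [5, 6, 4, 5, 3, 4], 2), ([0, 0, 0, 0, 1, 1], [6], 5)),
    (([2, 0, 0, 0], [0, 0, 0, 2]), ([1, 1, 1, 2, 2, 1], [5, 6, 4, 5, 2, 4, 3], 1), ([0, 1, 0, 1, 1, 0], [5, 4], 2)),
    (([2, 0, 0, 0], [0, 0, 2, 0]), ([1, 1, 1, 2, 2, 1], [5, 6, 4, 5, 2, 4, 3], 1), ([0, 0, 0, 1, 1, 0], [5], 4)),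
    (([2, 0, 0, 0], [0, 2, 0, 0]), ([1, 1, 1, 2, 2, 1], [5, 6, 4, 5, 2, 4, 3], 1), ([0, 0, 0, 0, 1, 0], [], 5))]"

definition NA :: nat where "NA = 53"

lemma chain_ok: "chainR baseR derR"
  by code_simp

lemma base_valid:
  assumes "BrF4_rels d r e"
  shows "validR d r e baseR"
proof -
  note R = assms[unfolded BrF4_rels_def]
  have Ri: "r i * r i = 1 \<and> r i * e i = e i \<and> e i * r i = e i" if "i \<in> {1..4}" for i
    using R that by blast
  have F0: "r 1 * r 1 = 1" using Ri[of 1] by simp
  have H0: "ev d r e [1, 1] = ev d r e []" using F0 by (simp add: ev_def lett_def mult.assoc)
  have F1: "r 2 * r 2 = 1" using Ri[of 2] by simp
  have H1: "ev d r e [2, 2] = ev d r e []" using F1 by (simp add: ev_def lett_def mult.assoc)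
  have F2: "r 3 * r 3 = 1" using Ri[of 3] by simp
  have H2: "ev d r e [3, 3] = ev d r e []" using F2 by (simp add: ev_def lett_def mult.assoc)
  have F3: "r 4 * r 4 = 1" using Ri[of 4] by simp
  have H3: "ev d r e [4, 4] = ev d r e []" using F3 by (simp add: ev_def lett_def mult.assoc)
  have F4: "r 1 * r 2 * r 1 = r 2 * r 1 * r 2" using R by blast
  have H4: "ev d r e [1, 2, 1] = ev d r e [2, 1, 2]" using F4 by (simp add: ev_def lett_def mult.assoc)
  have F5: "r 3 * r 4 * r 3 = r 4 * r 3 * r 4" using R by blast
  have H5: "ev d r e [3, 4, 3] = ev d r e [4, 3, 4]" using F5 by (simp add: ev_def lett_def mult.assoc)
  have F6: "r 2 * r 3 * r 2 * r 3 = r 3 * r 2 * r 3 * r 2" using R by blast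
  have H6: "ev d r e [2, 3, 2, 3] = ev d r e [3, 2, 3, 2]" using F6 by (simp add: ev_def lett_def mult.assoc)
  have F7: "r 1 * r 3 = r 3 * r 1" using R by blast
  have H7: "ev d r e [1, 3] = ev d r e [3, 1]" using F7 by (simp add: ev_def lett_def mult.assoc)
  have F8: "r 1 * r 4 = r 4 * r 1" using R by blast
  have H8: "ev d r e [1, 4] = ev d r e [4, 1]" using F8 by (simp add: ev_def lett_def mult.assoc)
  have F9: "r 2 * r 4 = r 4 * r 2" using R by blast
  have H9: "ev d r e [2, 4] = ev d r e [4, 2]" using F9 by (simp add: ev_def lett_def mult.assoc)
  have F10: "r 1 * e 1 = e 1" using Ri[of 1] by simp
  have H10: "ev d r e [1, 5] = ev d r e [5]" using F10 by (simp add: ev_def lett_def mult.assoc)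
  have F11: "e 1 * r 1 = e 1" using Ri[of 1] by simp
  have H11: "ev d r e [5, 1] = ev d r e [5]" using F11 by (simp add: ev_def lett_def mult.assoc)
  have F12: "r 2 * e 2 = e 2" using Ri[of 2] by simp
  have H12: "ev d r e [2, 6] = ev d r e [6]" using F12 by (simp add: ev_def lett_def mult.assoc)
  have F13: "e 2 * r 2 = e 2" using Ri[of 2] by simp
  have H13: "ev d r e [6, 2] = ev d r e [6]" using F13 by (simp add: ev_def lett_def mult.assoc)
  have F14: "r 3 * e 3 = e 3" using Ri[of 3] by simp
  have H14: "ev d r e [3, 7] = ev d r e [7]" using F14 by (simp add: ev_def lett_def mult.assoc)
  have F15: "e 3 * r 3 = e 3" using Ri[of 3] by simp
  have H15: "ev d r e [7, 3] = ev d r e [7]" using F15 by (simp add: ev_def lett_def mult.assoc)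
  have F16: "r 4 * e 4 = e 4" using Ri[of 4] by simp
  have H16: "ev d r e [4, 8] = ev d r e [8]" using F16 by (simp add: ev_def lett_def mult.assoc)
  have F17: "e 4 * r 4 = e 4" using Ri[of 4] by simp
  have H17: "ev d r e [8, 4] = ev d r e [8]" using F17 by (simp add: ev_def lett_def mult.assoc)
  have F18: "e 1 * r 3 = r 3 * e 1" using R by blast
  have H18: "ev d r e [5, 3] = ev d r e [3, 5]" using F18 by (simp add: ev_def lett_def mult.assoc)
  have F19: "e 3 * r 1 = r 1 * e 3" using R by blast
  have H19: "ev d r e [7, 1] = ev d r e [1, 7]" using F19 by (simp add: ev_def lett_def mult.assoc)
  have F20: "e 1 * e 3 = e 3 * e 1" using R by blast
  have H20: "ev d r e [5, 7] = ev d r e [7, 5]" using F20 by (simp add: ev_def lett_def mult.assoc)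
  have F21: "e 1 * r 4 = r 4 * e 1" using R by blast
  have H21: "ev d r e [5, 4] = ev d r e [4, 5]" using F21 by (simp add: ev_def lett_def mult.assoc)
  have F22: "e 4 * r 1 = r 1 * e 4" using R by blast
  have H22: "ev d r e [8, 1] = ev d r e [1, 8]" using F22 by (simp add: ev_def lett_def mult.assoc)
  have F23: "e 2 * r 4 = r 4 * e 2" using R by blast
  have H23: "ev d r e [6, 4] = ev d r e [4, 6]" using F23 by (simp add: ev_def lett_def mult.assoc)
  have F24: "e 4 * r 2 = r 2 * e 4" using R by blast
  have H24: "ev d r e [8, 2] = ev d r e [2, 8]" using F24 by (simp add: ev_def lett_def mult.assoc)
  have F25: "r 1 * e 2 * r 1 = r 2 * e 1 * r 2" using R by blast
  have H25: "ev d r e [1, 6, 1] = ev d r e [2, 5, 2]" using F25 by (simp add: ev_def lett_def mult.assoc)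
  have F26: "r 4 * r 3 * e 4 = e 3 * e 4" using R by blast
  have H26: "ev d r e [4, 3, 8] = ev d r e [7, 8]" using F26 by (simp add: ev_def lett_def mult.assoc)
  have F27: "r 3 * e 4 * r 3 = r 4 * e 3 * r 4" using R by blast
  have H27: "ev d r e [3, 8, 3] = ev d r e [4, 7, 4]" using F27 by (simp add: ev_def lett_def mult.assoc)
  have F28: "r 3 * r 4 * e 3 = e 4 * e 3" using R by blast
  have H28: "ev d r e [3, 4, 7] = ev d r e [8, 7]" using F28 by (simp add: ev_def lett_def mult.assoc)
  have F29: "r 2 * r 3 * e 2 = r 3 * e 2" using R by blast
  have H29: "ev d r e [2, 3, 6] = ev d r e [3, 6]" using F29 by (simp add: ev_def lett_def mult.assoc)
  have F30: "r 2 * e 3 * r 2 * e 3 = e 3 * e 2 * e 3" using R by blast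
  have H30: "ev d r e [2, 7, 2, 7] = ev d r e [7, 6, 7]" using F30 by (simp add: ev_def lett_def mult.assoc)
  have F31: "r 2 * r 3 * r 2 * e 3 = e 3 * (r 2 * r 3 * r 2)" using R by blast
  have H31: "ev d r e [2, 3, 2, 7] = ev d r e [7, 2, 3, 2]" using F31 by (simp add: ev_def lett_def mult.assoc)
  have F32: "e 2 * r 3 * r 2 = e 2 * r 3" using R by blast
  have H32: "ev d r e [6, 3, 2] = ev d r e [6, 3]" using F32 by (simp add: ev_def lett_def mult.assoc)
  have F33: "e 2 * e 3 * r 2 = e 2 * e 3" using R by blast
  have H33: "ev d r e [6, 7, 2] = ev d r e [6, 7]" using F33 by (simp add: ev_def lett_def mult.assoc)
  show ?thesis unfolding validR_def baseR_def using H0 H1 H2 H3 H4 H5 H6 H7 H8 H9 H10 H11 H12 H13 H14 H15 H16 H17 H18 H19 H20 H21 H22 H23 H24 H25 H26 H27 H28 H29 H30 H31 H32 H33 by simp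
qed




definition posI :: "int list \<Rightarrow> int list" where
  "posI t = (if t \<in> set posr then t else map uminus t)"
definition Ew :: "int list \<Rightarrow> nat list" where
  "Ew t = (case map_of Etab (posI t) of Some w \<Rightarrow> w | None \<Rightarrow> [])"
definition EE :: "'a::ring_1 \<Rightarrow> (nat \<Rightarrow> 'a) \<Rightarrow> (nat \<Rightarrow> 'a) \<Rightarrow> int list \<Rightarrow> 'a" where
  "EE d r e t = ev d r e (Ew t)"
definition allR where "allR = baseR @ map rl derR"
definition reps4 :: "(int list \<times> int list) list" where
  "reps4 = [([0,-2,2,0],[0,2,2,0]), ([0,2,2,0],[0,-2,2,0]), ([1,-1,-1,-1],[0,-2,2,0]), ([0,-2,2,0],[1,-1,-1,-1])]"

fun wI :: "nat list \<Rightarrow> int list \<Rightarrow> int list" where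
  "wI [] t = t"
| "wI (k # w) t = reflI k (wI w t)"

lemma roots_ok: "\<forall>t\<in>set roots48. length t = 4 \<and> even (t!0 - t!1 - t!2 - t!3) \<and> posI t \<in> set posr
   \<and> (\<forall>k\<in>set [1,2,3,4]. reflI k t \<in> set roots48)"
  by code_simp

lemma simple_ok: "\<forall>i\<in>set [1,2,3,4]. bI i \<in> set roots48 \<and> Ew (bI i) = [4+i]"
  by code_simp

lemma fin_ok: "map rl (drop NA derR) = map (\<lambda>(t,k). ([k] @ Ew t @ [k], Ew (reflI k t))) (List.product roots48 [1,2,3,4])
   @ [(Ew [0,-2,2,0] @ Ew [0,2,2,0], Ew [0,2,2,0] @ Ew [0,-2,2,0]),
      (Ew [1,-1,-1,-1] @ Ew [0,-2,2,0], Ew [0,-2,2,0] @ Ew [1,-1,-1,-1])]"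
  by code_simp

lemma ctab_ok: "list_all (\<lambda>((t1,t2),W,a,b). list_all (\<lambda>k. k \<in> set [1,2,3,4]) W \<and> (a,b) \<in> set reps4
    \<and> a \<in> set roots48 \<and> b \<in> set roots48 \<and> posI (wI W a) = t1 \<and> posI (wI W b) = t2) ctab"
  by code_simp

lemma ctab_cover: "map fst ctab = filter (\<lambda>(t1,t2). dotI t1 t2 = 0 \<and> \<not>(dotI t1 t1 = 4 \<and> dotI t2 t2 = 4)) (List.product posr posr)"
  by code_simp

lemma k4: "k \<in> {1..4} \<Longrightarrow> k \<in> set [1,2,3,4::nat]" by auto

lemma allR_valid: assumes "BrF4_rels d r e" shows "validR d r e allR"
  unfolding allR_def using chainR_sound[OF base_valid[OF assms] chain_ok] by simp

lemma fin_valid: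
  assumes "BrF4_rels d r e" "x \<in> set (map rl (drop NA derR))"
  shows "ev d r e (fst x) = ev d r e (snd x)"
proof -
  have "set (drop NA derR) \<subseteq> set derR" by (rule set_drop_subset)
  then have "x \<in> set allR" using assms(2) unfolding allR_def by auto
  then show ?thesis using allR_valid[OF assms(1)] unfolding validR_def by auto
qed

lemma lett_r: "k \<in> {1..4} \<Longrightarrow> lett d r e k = r k" by (simp add: lett_def)

lemma edge:
  assumes "BrF4_rels d r e" "t \<in> set roots48" "k \<in> {1..4}"
  shows "r k * EE d r e t * r k = EE d r e (reflI k t)"
proof -
  have "(t, k) \<in> set (List.product roots48 [1,2,3,4])" using assms(2) k4[OF assms(3)] by simp
  then have "([k] @ Ew t @ [k], Ew (reflI k t)) \<in> set (map rl (drop NA derR))"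
    unfolding fin_ok by force
  from fin_valid[OF assms(1) this] show ?thesis
    using assms(3) by (simp add: EE_def ev_Cons lett_r mult.assoc)
qed

lemma wact_Cons: "wact (k # w) v = refl4 (beta k) (wact w v)" by (simp add: wact_def)

lemma wI_ok:
  assumes "set w \<subseteq> {1..4}" "t \<in> set roots48"
  shows "wI w t \<in> set roots48 \<and> wact w (vo t) = vo (wI w t)"
  using assms(1)
proof (induction w)
  case Nil then show ?case using assms(2) by (simp add: wact_def)
next
  case (Cons k w)
  then have k: "k \<in> {1..4}" and IH: "wI w t \<in> set roots48" "wact w (vo t) = vo (wI w t)" by auto
  have ev: "even (wI w t!0 - wI w t!1 - wI w t!2 - wI w t!3)" and inr: "reflI k (wI w t) \<in> set roots48"
    using roots_ok IH(1) k4[OF k] by auto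
  show ?case using refl_vo[OF k ev] IH inr by (simp add: wact_Cons)
qed

lemma rword_Cons: "rword r (k # w) = r k * rword r w" by (simp add: rword_def)
lemma rword_Nil [simp]: "rword r [] = 1" by (simp add: rword_def)
lemma rword_append: "rword r (xs @ ys) = rword r xs * rword r ys" by (simp add: rword_def)

lemma rk: "BrF4_rels d r e \<Longrightarrow> k \<in> {1..4} \<Longrightarrow> r k * r k = 1"
  unfolding BrF4_rels_def by blast

lemma ebeta_EE:
  assumes "BrF4_rels d r e" "set w \<subseteq> {1..4}" "i \<in> {1..4}"
  shows "ebeta r e w i = EE d r e (wI w (bI i))"
  using assms(2)
proof (induction w)
  case Nil
  have "Ew (bI i) = [4+i]" using simple_ok k4[OF assms(3)] by auto
  then show ?case using assms(3) by (simp add: ebeta_def rword_def EE_def ev_Cons lett_def)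
next
  case (Cons k w)
  then have k: "k \<in> {1..4}" and IH: "ebeta r e w i = EE d r e (wI w (bI i))"
    and w: "set w \<subseteq> {1..4}" by auto
  have bi: "bI i \<in> set roots48" using simple_ok k4[OF assms(3)] by auto
  have "ebeta r e (k # w) i = r k * ebeta r e w i * r k"
    by (simp add: ebeta_def rword_Cons rword_append mult.assoc)
  also have "\<dots> = EE d r e (wI (k # w) (bI i))"
    using IH edge[OF assms(1) _ k] wI_ok[OF w bi] by auto
  finally show ?case .
qed

lemma conj_EE:
  assumes "BrF4_rels d r e" "set W \<subseteq> {1..4}" "t \<in> set roots48"
  shows "EE d r e (wI W t) = rword r W * EE d r e t * rword r (rev W)"
  using assms(2)
proof (induction W)
  case Nil then show ?case by (simp add: rword_def)
next
  case (Cons k W)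
  then have k: "k \<in> {1..4}" and IH: "EE d r e (wI W t) = rword r W * EE d r e t * rword r (rev W)"
    and W: "set W \<subseteq> {1..4}" by auto
  have "EE d r e (wI (k # W) t) = r k * EE d r e (wI W t) * r k"
    using edge[OF assms(1) _ k] wI_ok[OF W assms(3)] by simp
  also have "\<dots> = rword r (k # W) * EE d r e t * rword r (rev (k # W))"
    unfolding IH by (simp add: rword_Cons rword_append mult.assoc)
  finally show ?case .
qed

lemma rword_inv:
  assumes "BrF4_rels d r e" "set W \<subseteq> {1..4}"
  shows "rword r (rev W) * rword r W = 1"
  using assms(2)
proof (induction W)
  case Nil then show ?case by (simp add: rword_def)
next
  case (Cons k W)
  then have k: "k \<in> {1..4}" and IH: "rword r (rev W) * rword r W = 1" by auto
  have "rword r (rev (k # W)) * rword r (k # W) = rword r (rev W) * (r k * r k) * rword r W"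
    by (simp add: rword_Cons rword_append mult.assoc)
  also have "\<dots> = 1" using rk[OF assms(1) k] IH by simp
  finally show ?case .
qed

lemma comm_conj:
  assumes "BrF4_rels d r e" "set W \<subseteq> {1..4}" "a \<in> set roots48" "b \<in> set roots48"
    "EE d r e a * EE d r e b = EE d r e b * EE d r e a"
  shows "EE d r e (wI W a) * EE d r e (wI W b) = EE d r e (wI W b) * EE d r e (wI W a)"
proof -
  let ?X = "rword r W" and ?Y = "rword r (rev W)"
  have inv: "?Y * ?X = 1" by (rule rword_inv[OF assms(1,2)])
  have "EE d r e (wI W a) * EE d r e (wI W b) = ?X * (EE d r e a * (?Y * ?X) * EE d r e b) * ?Y"
    unfolding conj_EE[OF assms(1,2,3)] conj_EE[OF assms(1,2,4)] by (simp add: mult.assoc)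
  also have "\<dots> = ?X * (EE d r e b * (?Y * ?X) * EE d r e a) * ?Y" unfolding inv using assms(5) by simp
  also have "\<dots> = EE d r e (wI W b) * EE d r e (wI W a)"
    unfolding conj_EE[OF assms(1,2,3)] conj_EE[OF assms(1,2,4)] by (simp add: mult.assoc)
  finally show ?thesis .
qed

lemma reps_comm:
  assumes "BrF4_rels d r e" "(a, b) \<in> set reps4"
  shows "EE d r e a * EE d r e b = EE d r e b * EE d r e a"
proof -
  have c1: "EE d r e [0,-2,2,0] * EE d r e [0,2,2,0] = EE d r e [0,2,2,0] * EE d r e [0,-2,2,0]"
    using fin_valid[OF assms(1), of "(Ew [0,-2,2,0] @ Ew [0,2,2,0], Ew [0,2,2,0] @ Ew [0,-2,2,0])"]
    unfolding fin_ok by (simp add: EE_def)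
  have c2: "EE d r e [1,-1,-1,-1] * EE d r e [0,-2,2,0] = EE d r e [0,-2,2,0] * EE d r e [1,-1,-1,-1]"
    using fin_valid[OF assms(1), of "(Ew [1,-1,-1,-1] @ Ew [0,-2,2,0], Ew [0,-2,2,0] @ Ew [1,-1,-1,-1])"]
    unfolding fin_ok by (simp add: EE_def)
  show ?thesis using assms(2) c1 c2 unfolding reps4_def by auto
qed

lemma Ew_pos: "t \<in> set posr \<Longrightarrow> posI s = t \<Longrightarrow> Ew s = Ew t"
  by (simp add: Ew_def posI_def)

lemma comm_pos:
  assumes "BrF4_rels d r e" "t1 \<in> set posr" "t2 \<in> set posr" "dotI t1 t2 = 0"
    "\<not> (dotI t1 t1 = 4 \<and> dotI t2 t2 = 4)"
  shows "EE d r e t1 * EE d r e t2 = EE d r e t2 * EE d r e t1"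
proof -
  have "(t1, t2) \<in> set (map fst ctab)" unfolding ctab_cover using assms(2-5) by auto
  then obtain W a b where x: "((t1, t2), W, a, b) \<in> set ctab" by auto
  then have W: "set W \<subseteq> {1..4}" and ab: "(a,b) \<in> set reps4" and a: "a \<in> set roots48"
    and b: "b \<in> set roots48" and p1: "posI (wI W a) = t1" and p2: "posI (wI W b) = t2"
    using ctab_ok unfolding list_all_iff by (fastforce)+
  have "EE d r e (wI W a) = EE d r e t1" "EE d r e (wI W b) = EE d r e t2"
    using Ew_pos[OF assms(2) p1] Ew_pos[OF assms(3) p2] by (simp_all add: EE_def)
  with comm_conj[OF assms(1) W a b reps_comm[OF assms(1) ab]] show ?thesis by simp
qed




lemma pos_ok: "\<forall>t\<in>set roots48. t!0 \<ge> 0 \<and> t!0 + t!3 \<ge> 0 \<and> 2*t!0 + t!2 + t!3 \<ge> 0 \<and> 3*t!0 + t!1 + t!2 + t!3 \<ge> 0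
   \<longrightarrow> t \<in> set posr"
  by code_simp

lemma s4: "{1..4::nat} = {1,2,3,4}" by auto

lemma vo_pos:
  assumes "t \<in> set roots48" "vo t \<in> PsiF4_pos"
  shows "t \<in> set posr"
proof -
  obtain c :: "nat \<Rightarrow> real" where c: "\<forall>i. c i \<ge> 0" and E: "vo t = (\<Sum>i\<in>{1..4}. c i *\<^sub>R beta i)"
    using assms(2) unfolding PsiF4_pos_def by blast
  have E2: "vo t = c 1 *\<^sub>R vo (bI 1) + c 2 *\<^sub>R vo (bI 2) + c 3 *\<^sub>R vo (bI 3) + c 4 *\<^sub>R vo (bI 4)"
    using E[unfolded s4] by (simp add: beta_vo add.assoc)
  have e1: "of_int (t!0)/2 = c 1/2" using arg_cong[OF E2, of "\<lambda>v. v $ 1"] by (simp add: bI_def)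
  have e2: "of_int (t!1)/2 = - c 1/2 + c 2 - c 3" using arg_cong[OF E2, of "\<lambda>v. v $ 2"] by (simp add: bI_def)
  have e3: "of_int (t!2)/2 = - c 1/2 + c 3 - c 4" using arg_cong[OF E2, of "\<lambda>v. v $ 3"] by (simp add: bI_def)
  have e4: "of_int (t!3)/2 = - c 1/2 + c 4" using arg_cong[OF E2, of "\<lambda>v. v $ 4"] by (simp add: bI_def)
  have c1: "c 1 \<ge> 0" "c 2 \<ge> 0" "c 3 \<ge> 0" "c 4 \<ge> 0" using c by auto
  have "real_of_int (t!0) \<ge> 0" "real_of_int (t!0 + t!3) \<ge> 0" "real_of_int (2*t!0 + t!2 + t!3) \<ge> 0"
    "real_of_int (3*t!0 + t!1 + t!2 + t!3) \<ge> 0"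
    using e1 e2 e3 e4 c1 by simp_all
  then have "t!0 \<ge> 0 \<and> t!0 + t!3 \<ge> 0 \<and> 2*t!0 + t!2 + t!3 \<ge> 0 \<and> 3*t!0 + t!1 + t!2 + t!3 \<ge> 0"
    by linarith
  then show ?thesis using pos_ok assms(1) by blast
qed




definition vE :: "int list \<Rightarrow> nat \<Rightarrow> int" where
  "vE cs n = (if 1 \<le> n \<and> n \<le> 6 then cs!(n-1) else 0)"

definition formP :: "(nat \<Rightarrow> int) \<Rightarrow> (nat \<Rightarrow> int) \<Rightarrow> int" where
  "formP x y = 2*(x 1*y 1 + x 2*y 2 + x 3*y 3 + x 4*y 4 + x 5*y 5 + x 6*y 6)
     - (x 1*y 3 + x 3*y 1 + x 3*y 4 + x 4*y 3 + x 4*y 5 + x 5*y 4 + x 5*y 6 + x 6*y 5 + x 2*y 4 + x 4*y 2)"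

lemma s6: "{1..6::nat} = {1,2,3,4,5,6}" by auto

lemma cart: "cartanE6 1 1 = 2" "cartanE6 2 2 = 2" "cartanE6 3 3 = 2" "cartanE6 4 4 = 2" "cartanE6 5 5 = 2" "cartanE6 6 6 = 2"
  "cartanE6 1 3 = -1" "cartanE6 3 1 = -1" "cartanE6 3 4 = -1" "cartanE6 4 3 = -1" "cartanE6 4 5 = -1" "cartanE6 5 4 = -1"
  "cartanE6 5 6 = -1" "cartanE6 6 5 = -1" "cartanE6 2 4 = -1" "cartanE6 4 2 = -1"
  "cartanE6 1 2 = 0" "cartanE6 1 4 = 0" "cartanE6 1 5 = 0" "cartanE6 1 6 = 0"
  "cartanE6 2 1 = 0" "cartanE6 2 3 = 0" "cartanE6 2 5 = 0" "cartanE6 2 6 = 0"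
  "cartanE6 3 2 = 0" "cartanE6 3 5 = 0" "cartanE6 3 6 = 0"
  "cartanE6 4 1 = 0" "cartanE6 4 6 = 0"
  "cartanE6 5 1 = 0" "cartanE6 5 2 = 0" "cartanE6 5 3 = 0"
  "cartanE6 6 1 = 0" "cartanE6 6 2 = 0" "cartanE6 6 3 = 0" "cartanE6 6 4 = 0"
  by (simp_all add: cartanE6_def doubleton_eq_iff insert_commute)

lemma formE6_P: "formE6 x y = formP x y"
  unfolding formE6_def formP_def s6 by (simp add: cart[simplified] algebra_simps)

definition pL :: "int list \<Rightarrow> int list" where
  "pL cs = [cs!0 + cs!5, -(cs!0 + cs!5) + 2*(cs!2 + cs!4) - 2*cs!3, -(cs!0 + cs!5) + 2*cs!3 - 2*cs!1,
            -(cs!0 + cs!5) + 2*cs!1]"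

lemma pE6_vE: "pE6 (vE cs) = vo (pL cs)"
  unfolding pE6_def s6
  by (simp add: vE_def palpha_def beta_vo bI_def pL_def vec_eq_iff forall_4 field_simps)

definition unitL :: "nat \<Rightarrow> int list" where
  "unitL i = map (\<lambda>n. if n+1 = i then 1 else 0) [0..<6]"

definition reflL :: "nat \<Rightarrow> int list \<Rightarrow> int list" where
  "reflL i cs = map (\<lambda>n. cs!n - (if n+1 = i then formP (vE cs) (alphaE6 i) else 0)) [0..<6]"

lemma vE_unit: "i \<in> {1..6} \<Longrightarrow> vE (unitL i) = alphaE6 i"
  by (auto simp: fun_eq_iff vE_def unitL_def alphaE6_def)

lemma reflE6_vE: "i \<in> {1..6} \<Longrightarrow> reflE6 i (vE cs) = vE (reflL i cs)"
  by (auto simp: fun_eq_iff vE_def reflL_def reflE6_def alphaE6_def formE6_P)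

lemma memE:
  assumes "i \<in> {1..6}" "list_all (\<lambda>j. j \<in> set [1,2,3,4,5,6::nat]) ws"
  shows "vE (foldr reflL ws (unitL i)) \<in> PhiE6"
  using assms(2)
proof (induction ws)
  case Nil then show ?case using vE_unit[OF assms(1)] assms(1) PhiE6.simple by simp
next
  case (Cons j ws)
  then have j: "j \<in> {1..6}" and IH: "vE (foldr reflL ws (unitL i)) \<in> PhiE6" by auto
  show ?case using PhiE6.refl[OF IH j] reflE6_vE[OF j] by simp
qed

lemma posE:
  assumes "list_all (\<lambda>c. c \<ge> 0) xs" "length xs = 6" "vE xs \<in> PhiE6"
  shows "vE xs \<in> PhiE6_pos"
  using assms unfolding PhiE6_pos_def vE_def list_all_iff by (auto simp: nth_mem)

lemma ptab_ok: "list_all (\<lambda>((t1,t2),(xs,wx,ix),(ys,wy,iy)).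
    ix \<in> set [1,2,3,4,5,6] \<and> list_all (\<lambda>j. j \<in> set [1,2,3,4,5,6::nat]) wx \<and> foldr reflL wx (unitL ix) = xs
    \<and> list_all (\<lambda>c. c \<ge> 0) xs \<and> length xs = 6 \<and> pL xs = t1
  \<and> iy \<in> set [1,2,3,4,5,6] \<and> list_all (\<lambda>j. j \<in> set [1,2,3,4,5,6::nat]) wy \<and> foldr reflL wy (unitL iy) = ys
    \<and> list_all (\<lambda>c. c \<ge> 0) ys \<and> length ys = 6 \<and> pL ys = t2
  \<and> formP (vE xs) (vE ys) \<noteq> 0) ptab"
  by code_simp

lemma ptab_cover: "map fst ptab = filter (\<lambda>(t1,t2). dotI t1 t2 = 0 \<and> dotI t1 t1 = 4 \<and> dotI t2 t2 = 4) (List.product posr posr)"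
  by code_simp

lemma not_short_short:
  assumes "t1 \<in> set posr" "t2 \<in> set posr" "dotI t1 t2 = 0" "dotI t1 t1 = 4" "dotI t2 t2 = 4"
    "admissibleF4 X" "vo t1 \<in> X" "vo t2 \<in> X"
  shows False
proof -
  have "(t1, t2) \<in> set (map fst ptab)" unfolding ptab_cover using assms(1-5) by auto
  then obtain xs wx ix ys wy iy where x: "((t1, t2), (xs, wx, ix), (ys, wy, iy)) \<in> set ptab" by force
  then have ix: "ix \<in> {1..6}" and wx: "list_all (\<lambda>j. j \<in> set [1,2,3,4,5,6::nat]) wx"
    and fx: "foldr reflL wx (unitL ix) = xs" and nx: "list_all (\<lambda>c. c \<ge> 0) xs" and lx: "length xs = 6" and px: "pL xs = t1"
    and iy: "iy \<in> {1..6}" and wy: "list_all (\<lambda>j. j \<in> set [1,2,3,4,5,6::nat]) wy"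
    and fy: "foldr reflL wy (unitL iy) = ys" and ny: "list_all (\<lambda>c. c \<ge> 0) ys" and ly: "length ys = 6" and py: "pL ys = t2"
    and f: "formP (vE xs) (vE ys) \<noteq> 0"
    using ptab_ok unfolding list_all_iff by (fastforce)+
  have xP: "vE xs \<in> PhiE6_pos" using posE[OF nx lx] memE[OF ix wx] fx by simp
  have yP: "vE ys \<in> PhiE6_pos" using posE[OF ny ly] memE[OF iy wy] fy by simp
  let ?B = "{x \<in> PhiE6_pos. pE6 x \<in> X}"
  have xB: "vE xs \<in> ?B" using xP assms(7) px by (simp add: pE6_vE)
  have yB: "vE ys \<in> ?B" using yP assms(8) py by (simp add: pE6_vE)
  have ne: "vE xs \<noteq> vE ys"
  proof
    assume "vE xs = vE ys"
    then have "vo t1 = vo t2" using px py by (metis pE6_vE)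
    then have "dotI t1 t2 = dotI t1 t1" unfolding vo_eq dotI_def by simp
    then show False using assms(3,4) by simp
  qed
  have "admissibleE6 ?B" using assms(6) unfolding admissibleF4_def by blast
  then have "formE6 (vE xs) (vE ys) = 0" using xB yB ne unfolding admissibleE6_def by blast
  then show False using f by (simp add: formE6_P)
qed




theorem lemma3p4:
  fixes g1 g2 :: "real^4"
  assumes "g1 \<in> PsiF4_pos" and "g2 \<in> PsiF4_pos" and "g1 \<bullet> g2 = 0"
    and "\<exists>X. admissibleF4 X \<and> {g1, g2} \<subseteq> X"
  shows "\<forall>(d::'a::ring_1) r e. central_unit d \<and> BrF4_rels d r e \<longrightarrow>
           (\<forall>w1 w2 i j. set w1 \<subseteq> {1..4} \<and> set w2 \<subseteq> {1..4} \<and> i \<in> {1..4} \<and> j \<in> {1..4}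
              \<and> wact w1 (beta i) = g1 \<and> wact w2 (beta j) = g2
              \<longrightarrow> ebeta r e w1 i * ebeta r e w2 j = ebeta r e w2 j * ebeta r e w1 i)"
proof (intro allI impI)
  fix d :: 'a and r e w1 w2 i j
  assume H: "central_unit d \<and> BrF4_rels d r e"
  then have rels: "BrF4_rels d r e" by simp
  assume W: "set w1 \<subseteq> {1..4} \<and> set w2 \<subseteq> {1..4} \<and> i \<in> {1..4} \<and> j \<in> {1..4}
              \<and> wact w1 (beta i) = g1 \<and> wact w2 (beta j) = g2"
  then have w1: "set w1 \<subseteq> {1..4}" and w2: "set w2 \<subseteq> {1..4}" and i: "i \<in> {1..4}" and j: "j \<in> {1..4}"
    and a1: "wact w1 (beta i) = g1" and a2: "wact w2 (beta j) = g2" by auto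
  define t1 where "t1 = wI w1 (bI i)"
  define t2 where "t2 = wI w2 (bI j)"
  have bi: "bI i \<in> set roots48" using simple_ok k4[OF i] by auto
  have bj: "bI j \<in> set roots48" using simple_ok k4[OF j] by auto
  have r1: "t1 \<in> set roots48" and g1: "g1 = vo t1"
    using wI_ok[OF w1 bi] a1 unfolding t1_def beta_vo by auto
  have r2: "t2 \<in> set roots48" and g2: "g2 = vo t2"
    using wI_ok[OF w2 bj] a2 unfolding t2_def beta_vo by auto
  have p1: "t1 \<in> set posr" using vo_pos[OF r1] assms(1) g1 by simp
  have p2: "t2 \<in> set posr" using vo_pos[OF r2] assms(2) g2 by simp
  have o: "dotI t1 t2 = 0" using assms(3) unfolding g1 g2 vo_inner by simp
  have ns: "\<not> (dotI t1 t1 = 4 \<and> dotI t2 t2 = 4)"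
  proof
    assume s: "dotI t1 t1 = 4 \<and> dotI t2 t2 = 4"
    obtain X where "admissibleF4 X" "{g1, g2} \<subseteq> X" using assms(4) by blast
    then show False using not_short_short[OF p1 p2 o _ _ \<open>admissibleF4 X\<close>] s g1 g2 by auto
  qed
  have e1: "ebeta r e w1 i = EE d r e t1" unfolding t1_def by (rule ebeta_EE[OF rels w1 i])
  have e2: "ebeta r e w2 j = EE d r e t2" unfolding t2_def by (rule ebeta_EE[OF rels w2 j])
  show "ebeta r e w1 i * ebeta r e w2 j = ebeta r e w2 j * ebeta r e w1 i"
    unfolding e1 e2 by (rule comm_pos[OF rels p1 p2 o ns])
qed


end
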